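(* Let $d\in\mathbb{N}$, let $\lambda_1,\ldots,\lambda_d\ge0$, and let $\{\boldsymbol\eta(i)\}_{i\ge1}$ be an $\mathbb{R}^d$-valued time series. Suppose that, possibly after changing the probability space, for each $n$ there exist independent standard Wiener processes $W_{n,1},\ldots,W_{n,d}$ such that, with $\mathbf W_{\boldsymbol\lambda,n}(t)=(\sqrt{\lambda_1}W_{n,1}(t),\ldots,\sqrt{\lambda_d}W_{n,d}(t))^T$, $$\frac1{\sqrt n}\max_{1\le k\le n}\Big\|\sum_{i=1}^k\boldsymbol\eta(i)-\mathbf W_{\boldsymbol\lambda,n}(k)\Big\|\xrightarrow{a.s.}0.$$ Let $h:[-1,1]\to\mathbb{R}$ be non-constant with $h(x)=0$ for $x\le0$, of bounded total variation, and $\alpha$-Hölder continuous on $[0,1]$ for some $\alpha>0$. Then there exist independent standard Brownian bridges $\{B_{n,j}(t):0\le t\le1\}$, $j=1,\ldots,d$, such that $$\sup_{0<t<1}\Big\|\frac1{\sqrt n}\sum_{i=1}^nh\!\left(\frac{i-\lfloor nt\rfloor}{n}\right)(\boldsymbol\eta(i)-\bar{\boldsymbol\eta}_n)-\mathbf G_{\boldsymbol\lambda,n}(t)\Big\|\xrightarrow{\mathsf P}0.$$ Here $\bar{\boldsymbol\eta}_n=n^{-1}\sum_{i=1}^n\boldsymbol\eta(i)$, $\mathbf G_{\boldsymbol\lambda,n}(t)=(\sqrt{\lambda_1}G_{n,1}(t),\ldots,\sqrt{\lambda_d}G_{n,d}(t))^T$, and $G_{n,p}(t)=\int_0^{1-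t}B_{n,p}(1-t-y)\,dh(y)$.
   Context: $\|\cdot\|$ denotes the Euclidean norm on $\mathbb{R}^d$. The integral defining $G_{n,p}$ is a Riemann–Stieltjes integral with respect to $h$. *)

theory Defs
  imports "HOL-Probability.Probability"
begin

definition bounded_variation_on :: "(real \<Rightarrow> real) \<Rightarrow> real \<Rightarrow> real \<Rightarrow> bool" where
  "bounded_variation_on f a b \<longleftrightarrow>
     (\<exists>V. \<forall>(m::nat) (x::nat \<Rightarrow> real). x 0 = a \<and> x m = b \<and> (\<forall>i<m. x i \<le> x (Suc i)) \<longrightarrow>
        (\<Sum>i<m. \<bar>f (x (Suc i)) - f (x i)\<bar>) \<le> V)"

definition holder_on :: "real \<Rightarrow> real set \<Rightarrow> (real \<Rightarrow> real) \<Rightarrow> bool" where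
  "holder_on \<alpha> S f \<longleftrightarrow> (\<exists>C. \<forall>x\<in>S. \<forall>y\<in>S. \<bar>f x - f y\<bar> \<le> C * \<bar>x - y\<bar> powr \<alpha>)"

definition has_rs_integral :: "(real \<Rightarrow> real) \<Rightarrow> (real \<Rightarrow> real) \<Rightarrow> real \<Rightarrow> real \<Rightarrow> real \<Rightarrow> bool" where
  "has_rs_integral f g a b I \<longleftrightarrow>
     (\<forall>\<epsilon>>0. \<exists>\<delta>>0. \<forall>(m::nat) (x::nat \<Rightarrow> real) (\<xi>::nat \<Rightarrow> real).
        x 0 = a \<and> x m = b \<and> (\<forall>i<m. x i \<le> \<xi> i \<and> \<xi> i \<le> x (Suc i) \<and> x (Suc i) - x i < \<delta>) \<longrightarrow>
        \<bar>(\<Sum>i<m. f (\<xi> i) * (g (x (Suc i)) - g (x i))) - I\<bar> < \<epsilon>)"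

definition rs_integral :: "(real \<Rightarrow> real) \<Rightarrow> (real \<Rightarrow> real) \<Rightarrow> real \<Rightarrow> real \<Rightarrow> real" where
  "rs_integral f g a b = (THE I. has_rs_integral f g a b I)"

definition normal_rv :: "'a measure \<Rightarrow> ('a \<Rightarrow> real) \<Rightarrow> real \<Rightarrow> real \<Rightarrow> bool" where
  "normal_rv M X \<mu> s2 \<longleftrightarrow> X \<in> borel_measurable M \<and>
     (if s2 = 0 then (AE \<omega> in M. X \<omega> = \<mu>)
      else distributed M lborel X (normal_density \<mu> (sqrt s2)))"

definition centered_gaussian_process ::
    "'a measure \<Rightarrow> real set \<Rightarrow> (real \<Rightarrow> 'a \<Rightarrow> real) \<Rightarrow> (real \<Rightarrow> real \<Rightarrow> real) \<Rightarrow> bool" where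
  "centered_gaussian_process M T X K \<longleftrightarrow>
     (\<forall>t\<in>T. X t \<in> borel_measurable M) \<and>
     (\<forall>(m::nat) (ts::nat \<Rightarrow> real) (cs::nat \<Rightarrow> real). (\<forall>i<m. ts i \<in> T) \<longrightarrow>
        normal_rv M (\<lambda>\<omega>. \<Sum>i<m. cs i * X (ts i) \<omega>) 0
          (\<Sum>i<m. \<Sum>j<m. cs i * cs j * K (ts i) (ts j)))"

definition std_wiener_process :: "'a measure \<Rightarrow> (real \<Rightarrow> 'a \<Rightarrow> real) \<Rightarrow> bool" where
  "std_wiener_process M W \<longleftrightarrow>
     centered_gaussian_process M {0..} W (\<lambda>s t. min s t) \<and>
     (AE \<omega> in M. continuous_on {0..} (\<lambda>t. W t \<omega>))"

definition std_brownian_bridge :: "'a measure \<Rightarrow> (real \<Rightarrow> 'a \<Rightarrow> real) \<Rightarrow> bool" where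
  "std_brownian_bridge M B \<longleftrightarrow>
     centered_gaussian_process M {0..1} B (\<lambda>s t. min s t - s * t) \<and>
     (AE \<omega> in M. continuous_on {0..1} (\<lambda>t. B t \<omega>))"

definition indep_processes ::
    "'a measure \<Rightarrow> real set \<Rightarrow> 'j set \<Rightarrow> ('j \<Rightarrow> real \<Rightarrow> 'a \<Rightarrow> real) \<Rightarrow> bool" where
  "indep_processes M T J X \<longleftrightarrow>
     prob_space.indep_vars M (\<lambda>_. Pi\<^sub>M T (\<lambda>_. borel)) (\<lambda>j \<omega>. restrict (\<lambda>t. X j t \<omega>) T) J"

(* Outer probability (so that convergence in probability does not depend on measurability) *)
definition outer_prob :: "'a measure \<Rightarrow> 'a set \<Rightarrow> real" where
  "outer_prob M S = (INF A\<in>{A\<in>sets M. S \<subseteq> A}. measure M A)"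

end

theory Submission
  imports Defs
begin

definition nxt :: "real set \<Rightarrow> real \<Rightarrow> real" where
  "nxt X x = Min {y\<in>X. y > x}"

definition gsum :: "(real \<Rightarrow> real \<Rightarrow> real) \<Rightarrow> real set \<Rightarrow> real" where
  "gsum g X = (\<Sum>x\<in>{x\<in>X. x < Max X}. g x (nxt X x))"

lemma gsum_single: "gsum g {u} = 0"
proof -
  show ?thesis unfolding gsum_def by (rule sum.neutral) auto
qed

lemma gsum_insert_max:
  assumes X: "finite X" "X \<noteq> {}" and z: "z > Max X"
  shows "gsum g (insert z X) = gsum g X + g (Max X) z"
proof -
  have "Max (insert z X) = max z (Max X)" using X by (rule Max_insert)
  hence mx: "Max (insert z X) = z" using z by simp
  have le: "x \<le> Max X" if "x \<in> X" for x using X that by simp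
  have S: "{x\<in>insert z X. x < z} = X" using le z by force
  have XS: "X = insert (Max X) {x\<in>X. x < Max X}" 
  proof (rule set_eqI)
    fix x show "x \<in> X \<longleftrightarrow> x \<in> insert (Max X) {x\<in>X. x < Max X}"
      using le[of x] Max_in[OF X] by (cases "x = Max X") auto
  qed
  have n1: "nxt (insert z X) (Max X) = z"
  proof -
    have "{y\<in>insert z X. y > Max X} = {z}" using le z by force
    thus ?thesis by (simp add: nxt_def)
  qed
  have n2: "nxt (insert z X) x = nxt X x" if "x \<in> X" "x < Max X" for x
  proof -
    have e: "{y\<in>insert z X. y > x} = insert z {y\<in>X. y > x}" using that z by auto
    have ne: "{y\<in>X. y > x} \<noteq> {}" using that X Max_in by blast
    have fin: "finite {y\<in>X. y > x}" using X by auto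
    have "Min {y\<in>X. y > x} \<in> X" using Min_in[OF fin ne] by auto
    hence mp: "Min {y\<in>X. y > x} \<le> Max X" using le by blast
    have "nxt (insert z X) x = Min (insert z {y\<in>X. y > x})" unfolding nxt_def e ..
    also have "\<dots> = min z (Min {y\<in>X. y > x})" using ne fin by (intro Min_insert) auto
    also have "\<dots> = Min {y\<in>X. y > x}" using mp z by (intro min_absorb2) linarith
    finally show ?thesis by (simp add: nxt_def)
  qed
  have "gsum g (insert z X) = (\<Sum>x\<in>X. g x (nxt (insert z X) x))"
    unfolding gsum_def mx S ..
  also have "\<dots> = g (Max X) z + (\<Sum>x\<in>{x\<in>X. x < Max X}. g x (nxt (insert z X) x))"
  proof -
    have "X - {Max X} = {x\<in>X. x < Max X}" using le by force
    then show ?thesis using sum.remove[OF X(1) Max_in[OF X], of "\<lambda>x. g x (nxt (insert z X) x)"] n1 by simp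
  qed
  also have "\<dots> = g (Max X) z + gsum g X"
    unfolding gsum_def by (simp add: n2)
  finally show ?thesis by simp
qed

lemma gsum_insert_mid:
  assumes X: "finite X" and zX: "z \<notin> X" and a: "a \<in> X" "a < z" and b: "b \<in> X" "b > z"
  shows "gsum g (insert z X) = gsum g X - g (Max {x\<in>X. x < z}) (Min {x\<in>X. x > z})
     + g (Max {x\<in>X. x < z}) z + g z (Min {x\<in>X. x > z})"
proof -
  define p where "p = Max {x\<in>X. x < z}"
  define n where "n = Min {x\<in>X. x > z}"
  have fA: "finite {x\<in>X. x < z}" "{x\<in>X. x < z} \<noteq> {}" using X a by auto
  have fB: "finite {x\<in>X. x > z}" "{x\<in>X. x > z} \<noteq> {}" using X b by auto
  have pX: "p \<in> X" "p < z" using Max_in[OF fA] unfolding p_def by auto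
  have pge: "x \<le> p" if "x \<in> X" "x < z" for x using Max_ge[OF fA(1)] that unfolding p_def by auto
  have nX: "n \<in> X" "n > z" using Min_in[OF fB] unfolding n_def by auto
  have nle: "n \<le> x" if "x \<in> X" "x > z" for x using Min_le[OF fB(1)] that unfolding n_def by auto
  have le: "x \<le> Max X" if "x \<in> X" for x using X that by simp
  have mx: "Max (insert z X) = Max X" using X b le by (metis Max_insert empty_iff max.absorb2 order.strict_trans2 less_imp_le)
  have zlt: "z < Max X" using b le by fastforce
  define S where "S = {x\<in>X. x < Max X}"
  have S': "{x\<in>insert z X. x < Max (insert z X)} = insert z S" unfolding mx S_def using zlt by auto
  have zS: "z \<notin> S" using zX S_def by auto
  have fS: "finite S" using X S_def by auto
  have pS: "p \<in> S" using pX zlt S_def by auto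
  have gt_p: "{y\<in>X. y > p} = {y\<in>X. y > z}"
  proof -
    have "y > z" if "y \<in> X" "y > p" for y
    proof (rule ccontr)
      assume "\<not> y > z"
      then have "y < z" using that zX by (cases "y = z") auto
      then show False using pge[OF that(1)] that by simp
    qed
    then show ?thesis using pX by force
  qed
  have n_z: "nxt (insert z X) z = n"
  proof -
    have "{y\<in>insert z X. y > z} = {y\<in>X. y > z}" by auto
    thus ?thesis by (simp add: nxt_def n_def)
  qed
  have n_p: "nxt (insert z X) p = z"
  proof -
    have "{y\<in>insert z X. y > p} = insert z {y\<in>X. y > z}" using gt_p pX by auto
    moreover have "z \<le> Min {y\<in>X. y > z}" using fB by (simp add: less_imp_le)
    ultimately show ?thesis using fB by (simp add: nxt_def min_def)
  qed
  have n_p2: "nxt X p = n" unfolding nxt_def gt_p n_def ..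
  have n_o: "nxt (insert z X) x = nxt X x" if "x \<in> S" "x \<noteq> p" for x
  proof (cases "x > z")
    case True
    then have "{y\<in>insert z X. y > x} = {y\<in>X. y > x}" by auto
    thus ?thesis by (simp add: nxt_def)
  next
    case False
    then have "x < p" using that pge[of x] zX S_def by force
    have e: "{y\<in>insert z X. y > x} = insert z {y\<in>X. y > x}" using \<open>x < p\<close> pX by auto
    have ne: "{y\<in>X. y > x} \<noteq> {}" "finite {y\<in>X. y > x}" using pX \<open>x<p\<close> X by auto
    have mp: "Min {y\<in>X. y > x} \<le> p" using ne pX \<open>x<p\<close> by (intro Min_le) auto
    have "nxt (insert z X) x = Min (insert z {y\<in>X. y > x})" unfolding nxt_def e ..
    also have "\<dots> = min z (Min {y\<in>X. y > x})" using ne by (intro Min_insert) auto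
    also have "\<dots> = Min {y\<in>X. y > x}" using mp pX by (intro min_absorb2) linarith
    finally show ?thesis by (simp add: nxt_def)
  qed
  have "gsum g (insert z X) = g z n + (\<Sum>x\<in>S. g x (nxt (insert z X) x))"
    unfolding gsum_def S' using fS zS n_z by simp
  also have "(\<Sum>x\<in>S. g x (nxt (insert z X) x)) = g p z + (\<Sum>x\<in>S-{p}. g x (nxt X x))"
    using fS pS n_p n_o by (simp add: sum.remove)
  also have "gsum g X = g p n + (\<Sum>x\<in>S-{p}. g x (nxt X x))"
    unfolding gsum_def S_def[symmetric] using fS pS n_p2 by (simp add: sum.remove)
  ultimately show ?thesis unfolding p_def[symmetric] n_def[symmetric] by simp
qed


lemma seq_mono:
  assumes "\<forall>i<m. x i \<le> x (Suc i)" "i \<le> j" "j \<le> m"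
  shows "x i \<le> (x j :: real)"
  using assms(2,3)
proof (induction j)
  case 0 then show ?case by simp
next
  case (Suc j)
  show ?case
  proof (cases "i = Suc j")
    case False
    then have "x i \<le> x j" using Suc by simp
    also have "x j \<le> x (Suc j)" using assms(1) Suc by simp
    finally show ?thesis .
  qed simp
qed

lemma seq_Max:
  assumes "\<forall>i<m. x i \<le> x (Suc i)"
  shows "Max (x ` {..m}) = (x m :: real)"
  by (rule Max_eqI) (use seq_mono[OF assms] in auto)

lemma seq_gsum:
  assumes "\<forall>i<m. x i \<le> x (Suc i)" and g0: "\<And>u. g u u = 0"
  shows "(\<Sum>i<m. g (x i) (x (Suc i))) = gsum g (x ` {..m})"
  using assms(1)
proof (induction m)
  case 0
  then show ?case by (simp add: gsum_single)
next
  case (Suc m)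
  have IH: "(\<Sum>i<m. g (x i) (x (Suc i))) = gsum g (x ` {..m})" using Suc by simp
  have im: "x ` {..Suc m} = insert (x (Suc m)) (x ` {..m})" by (simp add: atMost_Suc)
  have le: "x m \<le> x (Suc m)" using Suc.prems by simp
  show ?case
  proof (cases "x (Suc m) = x m")
    case True
    then have "x ` {..Suc m} = x ` {..m}" using im by auto
    then show ?thesis using IH True g0 by simp
  next
    case False
    then have gt: "x (Suc m) > Max (x ` {..m})" using le seq_Max[of m x] Suc.prems by (simp add: order.order_iff_strict)
    have "gsum g (x ` {..Suc m}) = gsum g (x ` {..m}) + g (Max (x ` {..m})) (x (Suc m))"
      unfolding im by (rule gsum_insert_max) (use gt in auto)
    then show ?thesis using IH seq_Max[of m x] Suc.prems by simp
  qed
qed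

lemma gsum_Max_le:
  assumes "finite X" "x \<in> X" shows "Max {y\<in>X. y \<le> x} = x"
  by (rule Max_eqI) (use assms in auto)

lemma gsum_refine:
  fixes X D :: "real set" and f h :: "real \<Rightarrow> real"
  assumes X: "finite X" "X \<noteq> {}" and D: "finite D" "D \<inter> X = {}" "\<forall>z\<in>D. Min X < z \<and> z < Max X"
  shows "gsum (\<lambda>u v. f u * (h v - h u)) (X \<union> D) - gsum (\<lambda>u v. f u * (h v - h u)) X
       = gsum (\<lambda>u v. (f u - f (Max {x\<in>X. x \<le> u})) * (h v - h u)) (X \<union> D)"
  using D
proof (induction D rule: finite_induct)
  case empty
  have "gsum (\<lambda>u v. (f u - f (Max {x\<in>X. x \<le> u})) * (h v - h u)) X = 0"
    unfolding gsum_def by (rule sum.neutral) (use X gsum_Max_le[OF X(1)] in auto)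
  then show ?case by simp
next
  case (insert z D)
  define Y where "Y = X \<union> D"
  have Y: "finite Y" "z \<notin> Y" using insert X unfolding Y_def by auto
  have mi: "Min X \<in> Y" "Min X < z" using insert X Min_in unfolding Y_def by auto
  have ma: "Max X \<in> Y" "Max X > z" using insert X Max_in unfolding Y_def by auto
  define p where "p = Max {y\<in>Y. y < z}"
  define n where "n = Min {y\<in>Y. y > z}"
  have fA: "finite {y\<in>Y. y < z}" "{y\<in>Y. y < z} \<noteq> {}" using Y mi by auto
  have pge: "x \<le> p" if "x \<in> Y" "x < z" for x using Max_ge[OF fA(1)] that unfolding p_def by auto
  have pz: "p < z" using Max_in[OF fA] unfolding p_def by auto
  have XY: "X \<subseteq> Y" unfolding Y_def by auto
  have pi: "Max {x\<in>X. x \<le> z} = Max {x\<in>X. x \<le> p}"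
  proof -
    have "{x\<in>X. x \<le> z} = {x\<in>X. x \<le> p}"
    proof (rule set_eqI, rule iffI)
      fix x assume "x \<in> {x\<in>X. x \<le> z}"
      then have "x \<in> X" "x < z" using insert.prems X by (auto simp: order.order_iff_strict)
      then show "x \<in> {x\<in>X. x \<le> p}" using pge XY by auto
    qed (use pz in auto)
    then show ?thesis by simp
  qed
  have e: "X \<union> insert z D = insert z Y" unfolding Y_def by auto
  have IH: "gsum (\<lambda>u v. f u * (h v - h u)) Y - gsum (\<lambda>u v. f u * (h v - h u)) X
       = gsum (\<lambda>u v. (f u - f (Max {x\<in>X. x \<le> u})) * (h v - h u)) Y"
    using insert unfolding Y_def by auto
  note m1 = gsum_insert_mid[OF Y(1) Y(2) mi ma, of "\<lambda>u v. f u * (h v - h u)", folded p_def n_def]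
  note m2 = gsum_insert_mid[OF Y(1) Y(2) mi ma, of "\<lambda>u v. (f u - f (Max {x\<in>X. x \<le> u})) * (h v - h u)", folded p_def n_def]
  show ?case unfolding e m1 m2 using IH pi by (simp add: algebra_simps)
qed

lemma enum_set:
  fixes Z :: "real set"
  assumes "finite Z" "Z \<noteq> {}"
  obtains m x where "\<forall>i<m. x i \<le> x (Suc i)" "x ` {..m} = Z"
proof -
  define xs where "xs = sorted_list_of_set Z"
  have s: "sorted xs" "set xs = Z" "length xs > 0" using assms unfolding xs_def
    by (auto simp: sorted_list_of_set.length_sorted_key_list_of_set card_gt_0_iff)
  define m where "m = length xs - 1"
  have "\<forall>i<m. xs ! i \<le> xs ! (Suc i)" using s(1) unfolding m_def by (auto intro: sorted_nth_mono)
  moreover have "(\<lambda>i. xs ! i) ` {..m} = Z"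
  proof -
    have "{..m} = {..<length xs}" using s(3) unfolding m_def by (auto simp: less_Suc_eq_le[symmetric])
    then show ?thesis using s(2) by (auto simp: set_conv_nth)
  qed
  ultimately show ?thesis using that by blast
qed


definition partn :: "real \<Rightarrow> real \<Rightarrow> nat \<Rightarrow> (nat \<Rightarrow> real) \<Rightarrow> bool" where
  "partn a b m x \<longleftrightarrow> x 0 = a \<and> x m = b \<and> (\<forall>i<m. x i \<le> x (Suc i))"

definition VB :: "(real \<Rightarrow> real) \<Rightarrow> real \<Rightarrow> bool" where
  "VB h V \<longleftrightarrow> (\<forall>m x. (\<forall>i<m. x i \<le> x (Suc i)) \<and> (\<forall>i\<le>m. x i \<in> {-1..1}) \<longrightarrow>
      (\<Sum>i<m. \<bar>h (x (Suc i)) - h (x i)\<bar>) \<le> V)"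

definition modc :: "(real \<Rightarrow> real) \<Rightarrow> real \<Rightarrow> real \<Rightarrow> real \<Rightarrow> real \<Rightarrow> bool" where
  "modc f a b \<delta> \<epsilon> \<longleftrightarrow> (\<forall>u v. u \<in> {a..b} \<longrightarrow> v \<in> {a..b} \<longrightarrow> \<bar>u - v\<bar> \<le> \<delta> \<longrightarrow> \<bar>f u - f v\<bar> \<le> \<epsilon>)"

definition Lsum :: "(real \<Rightarrow> real) \<Rightarrow> (real \<Rightarrow> real) \<Rightarrow> nat \<Rightarrow> (nat \<Rightarrow> real) \<Rightarrow> real" where
  "Lsum f h m x = (\<Sum>i<m. f (x i) * (h (x (Suc i)) - h (x i)))"

lemma modc_nonneg: "modc f a b \<delta> \<epsilon> \<Longrightarrow> \<delta> \<ge> 0 \<Longrightarrow> a \<le> b \<Longrightarrow> \<epsilon> \<ge> 0"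
  using modc_def[of f a b \<delta> \<epsilon>] by (metis abs_ge_zero atLeastAtMost_iff diff_self abs_zero order_refl order.trans)

lemma partn_range: "partn a b m x \<Longrightarrow> i \<le> m \<Longrightarrow> x i \<in> {a..b}"
  unfolding partn_def using seq_mono[of m x 0 i] seq_mono[of m x i m] by auto

lemma VB_from_bv:
  assumes "bounded_variation_on h (-1) 1"
  obtains V where "V \<ge> 0" "VB h V"
proof -
  obtain V where V: "\<And>m x. x 0 = -1 \<Longrightarrow> x m = 1 \<Longrightarrow> (\<forall>i<m. x i \<le> x (Suc i)) \<Longrightarrow>
        (\<Sum>i<m. \<bar>h (x (Suc i)) - h (x i)\<bar>) \<le> V"
    using assms unfolding bounded_variation_on_def by blast
  have V0: "V \<ge> 0"
    using V[of "\<lambda>i. if i = 0 then -1 else 1" 1] by simp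
  have "VB h V" unfolding VB_def
  proof (intro allI impI)
    fix m and x :: "nat \<Rightarrow> real" assume a: "(\<forall>i<m. x i \<le> x (Suc i)) \<and> (\<forall>i\<le>m. x i \<in> {-1..1})"
    define y :: "nat \<Rightarrow> real" where "y i = (if i = 0 then -1 else if i \<le> Suc m then x (i - 1) else 1)" for i
    have y0: "y 0 = -1" and ym: "y (Suc (Suc m)) = 1" unfolding y_def by auto
    have ymono: "\<forall>i<Suc (Suc m). y i \<le> y (Suc i)"
    proof (intro allI impI)
      fix i assume i: "i < Suc (Suc m)"
      show "y i \<le> y (Suc i)"
      proof (cases "i = 0")
        case True then show ?thesis using a unfolding y_def by auto
      next
        case False
        show ?thesis
        proof (cases "i = Suc m")
          case True then show ?thesis using a unfolding y_def by auto
        next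
          case F2: False
          then have "i - 1 < m" "Suc (i - 1) = i" using i False by auto
          have e1: "y i = x (i - 1)" using False F2 i unfolding y_def by auto
          have e2: "y (Suc i) = x i" using F2 i unfolding y_def by auto
          have "x (i - 1) \<le> x (Suc (i - 1))" using a \<open>i - 1 < m\<close> by blast
          then show ?thesis using e1 e2 \<open>Suc (i - 1) = i\<close> by simp
        qed
      qed
    qed
    have "(\<Sum>i<Suc (Suc m). \<bar>h (y (Suc i)) - h (y i)\<bar>) =
        \<bar>h (y 1) - h (y 0)\<bar> + (\<Sum>i<m. \<bar>h (y (Suc (Suc i))) - h (y (Suc i))\<bar>) + \<bar>h (y (Suc (Suc m))) - h (y (Suc m))\<bar>"
      unfolding sum.lessThan_Suc[where n="Suc m"] sum.lessThan_Suc_shift[where n=m] by simp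
    also have "(\<Sum>i<m. \<bar>h (y (Suc (Suc i))) - h (y (Suc i))\<bar>) = (\<Sum>i<m. \<bar>h (x (Suc i)) - h (x i)\<bar>)"
      by (rule sum.cong) (auto simp: y_def)
    finally have "(\<Sum>i<m. \<bar>h (x (Suc i)) - h (x i)\<bar>) \<le> (\<Sum>i<Suc (Suc m). \<bar>h (y (Suc i)) - h (y i)\<bar>)"
      by simp
    also have "\<dots> \<le> V" by (rule V[OF y0 ym ymono])
    finally show "(\<Sum>i<m. \<bar>h (x (Suc i)) - h (x i)\<bar>) \<le> V" .
  qed
  then show ?thesis using that V0 by blast
qed

lemma gsum_abs_le:
  assumes "VB h V" "finite Y" "Y \<noteq> {}" "Y \<subseteq> {-1..1}"
  shows "gsum (\<lambda>u v. \<bar>h v - h u\<bar>) Y \<le> V"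
proof -
  obtain m x where x: "\<forall>i<m. x i \<le> x (Suc i)" "x ` {..m} = Y" using enum_set[OF assms(2,3)] by blast
  have "gsum (\<lambda>u v. \<bar>h v - h u\<bar>) Y = (\<Sum>i<m. \<bar>h (x (Suc i)) - h (x i)\<bar>)"
    using seq_gsum[OF x(1), of "\<lambda>u v. \<bar>h v - h u\<bar>"] x(2) by simp
  also have "\<dots> \<le> V" using assms(1) x assms(4) unfolding VB_def by blast
  finally show ?thesis .
qed

lemma gsum_abs_bound:
  assumes "finite Y" "\<And>u. u \<in> Y \<Longrightarrow> u < Max Y \<Longrightarrow> \<bar>g u (nxt Y u)\<bar> \<le> c * g' u (nxt Y u)"
  shows "\<bar>gsum g Y\<bar> \<le> c * gsum g' Y"
proof -
  have "\<bar>gsum g Y\<bar> \<le> (\<Sum>x\<in>{x\<in>Y. x < Max Y}. \<bar>g x (nxt Y x)\<bar>)"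
    unfolding gsum_def by (rule sum_abs)
  also have "\<dots> \<le> (\<Sum>x\<in>{x\<in>Y. x < Max Y}. c * g' x (nxt Y x))"
    by (rule sum_mono) (use assms in auto)
  also have "\<dots> = c * gsum g' Y" unfolding gsum_def by (simp add: sum_distrib_left)
  finally show ?thesis .
qed

lemma pi_close:
  assumes P: "partn a b m x" and mesh: "\<forall>i<m. x (Suc i) - x i \<le> \<delta>" and u: "a \<le> u" "u < b"
  shows "Max {y\<in>x ` {..m}. y \<le> u} \<in> x ` {..m}" "Max {y\<in>x ` {..m}. y \<le> u} \<le> u"
        "u - Max {y\<in>x ` {..m}. y \<le> u} \<le> \<delta>"
proof -
  define I where "I = {i. i \<le> m \<and> x i \<le> u}"
  have fI: "finite I" "0 \<in> I" using P u unfolding I_def partn_def by auto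
  define i0 where "i0 = Max I"
  have "I \<noteq> {}" using fI by auto
  hence "i0 \<in> I" using Max_in[OF fI(1)] unfolding i0_def by auto
  hence i0: "i0 \<le> m" "x i0 \<le> u" unfolding I_def by auto
  have i0m: "i0 < m" using i0 P u unfolding partn_def by (metis le_neq_implies_less not_le)
  have nx: "x (Suc i0) > u"
  proof (rule ccontr)
    assume "\<not> x (Suc i0) > u"
    then have "Suc i0 \<in> I" using i0m unfolding I_def by auto
    then show False using Max_ge[OF fI(1)] unfolding i0_def by fastforce
  qed
  define Pp where "Pp = {y\<in>x ` {..m}. y \<le> u}"
  have fP: "finite Pp" "x i0 \<in> Pp" using i0 unfolding Pp_def by auto
  have "Pp \<noteq> {}" using fP by blast
  have "Max Pp \<in> Pp" using fP(1) \<open>Pp \<noteq> {}\<close> by (rule Max_in)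
  then show "Max {y\<in>x ` {..m}. y \<le> u} \<in> x ` {..m}" "Max {y\<in>x ` {..m}. y \<le> u} \<le> u"
    unfolding Pp_def by auto
  have "Max Pp \<ge> x i0" using Max_ge[OF fP] .
  moreover have "x (Suc i0) - x i0 \<le> \<delta>" using mesh i0m by auto
  ultimately show "u - Max {y\<in>x ` {..m}. y \<le> u} \<le> \<delta>" using nx unfolding Pp_def by linarith
qed

lemma Lsum_refine_bound:
  assumes P: "partn a b m x" and ab: "a < b" "-1 \<le> a" "b \<le> 1"
    and mesh: "\<forall>i<m. x (Suc i) - x i \<le> \<delta>" and mc: "modc f a b \<delta> \<epsilon>" and V: "VB h V"
    and d0: "\<delta> \<ge> 0" and Y: "finite Y" "x ` {..m} \<subseteq> Y" "Y \<subseteq> {a..b}"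
  shows "\<bar>gsum (\<lambda>u v. f u * (h v - h u)) Y - Lsum f h m x\<bar> \<le> \<epsilon> * V"
proof -
  define X where "X = x ` {..m}"
  have mono: "\<forall>i<m. x i \<le> x (Suc i)" using P unfolding partn_def by auto
  have L: "Lsum f h m x = gsum (\<lambda>u v. f u * (h v - h u)) X"
    unfolding Lsum_def X_def by (rule seq_gsum[OF mono]) simp
  have fX: "finite X" "X \<noteq> {}" unfolding X_def by auto
  have Xr: "X \<subseteq> {a..b}" unfolding X_def using partn_range[OF P] by auto
  have aX: "a \<in> X" "b \<in> X" using P unfolding X_def partn_def by force+
  have minX: "Min X = a" by (rule Min_eqI) (use fX Xr aX in auto)
  have maxX: "Max X = b" by (rule Max_eqI) (use fX Xr aX in auto)
  have maxY: "Max Y = b" by (rule Max_eqI) (use Y aX X_def in auto)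
  define D where "D = Y - X"
  have D: "finite D" "D \<inter> X = {}" "\<forall>z\<in>D. Min X < z \<and> z < Max X"
  proof -
    show "finite D" "D \<inter> X = {}" using Y unfolding D_def by auto
    show "\<forall>z\<in>D. Min X < z \<and> z < Max X"
    proof
      fix z assume "z \<in> D"
      then have "z \<in> {a..b}" "z \<noteq> a" "z \<noteq> b" using Y aX unfolding D_def by auto
      then show "Min X < z \<and> z < Max X" unfolding minX maxX by auto
    qed
  qed
  have YXD: "X \<union> D = Y" using Y unfolding D_def X_def by auto
  note r = gsum_refine[OF fX D, of f h, unfolded YXD]
  have "\<bar>gsum (\<lambda>u v. (f u - f (Max {x\<in>X. x \<le> u})) * (h v - h u)) Y\<bar> \<le> \<epsilon> * gsum (\<lambda>u v. \<bar>h v - h u\<bar>) Y"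
  proof (rule gsum_abs_bound[OF Y(1)])
    fix u assume u: "u \<in> Y" "u < Max Y"
    have ur: "a \<le> u" "u < b" using u Y maxY by auto
    note pc = pi_close[OF P mesh ur, folded X_def]
    have pr: "Max {x\<in>X. x \<le> u} \<in> {a..b}" using pc(1) Xr by blast
    have "\<bar>f u - f (Max {x\<in>X. x \<le> u})\<bar> \<le> \<epsilon>"
      by (rule mc[unfolded modc_def, rule_format]) (use pr pc(2,3) ur in auto)
    then show "\<bar>(f u - f (Max {x\<in>X. x \<le> u})) * (h (nxt Y u) - h u)\<bar> \<le> \<epsilon> * \<bar>h (nxt Y u) - h u\<bar>"
      by (simp add: abs_mult mult_right_mono)
  qed
  also have "\<dots> \<le> \<epsilon> * V"
  proof -
    have "a \<in> {a..b}" using ab by auto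
    hence e0: "\<epsilon> \<ge> 0" using modc_nonneg[OF mc d0] by simp
    have "gsum (\<lambda>u v. \<bar>h v - h u\<bar>) Y \<le> V" using gsum_abs_le[OF V Y(1)] Y aX ab X_def by fastforce
    then show ?thesis using e0 by (simp add: mult_left_mono)
  qed
  finally have fin: "\<bar>gsum (\<lambda>u v. (f u - f (Max {x\<in>X. x \<le> u})) * (h v - h u)) Y\<bar> \<le> \<epsilon> * V" .
  show ?thesis using fin by (simp only: L r)
qed

lemma Lsum_cmp:
  assumes P: "partn a b m x" "partn a b m' x'" and ab: "a < b" "-1 \<le> a" "b \<le> 1"
    and mesh: "\<forall>i<m. x (Suc i) - x i \<le> \<delta>" "\<forall>i<m'. x' (Suc i) - x' i \<le> \<delta>"
    and mc: "modc f a b \<delta> \<epsilon>" and V: "VB h V" and d0: "\<delta> \<ge> 0"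
  shows "\<bar>Lsum f h m x - Lsum f h m' x'\<bar> \<le> 2 * \<epsilon> * V"
proof -
  define Y where "Y = x ` {..m} \<union> x' ` {..m'}"
  have Y: "finite Y" "Y \<subseteq> {a..b}" unfolding Y_def using partn_range[OF P(1)] partn_range[OF P(2)] by auto
  have 1: "\<bar>gsum (\<lambda>u v. f u * (h v - h u)) Y - Lsum f h m x\<bar> \<le> \<epsilon> * V"
    by (rule Lsum_refine_bound[OF P(1) ab mesh(1) mc V d0 Y(1) _ Y(2)]) (auto simp: Y_def)
  have 2: "\<bar>gsum (\<lambda>u v. f u * (h v - h u)) Y - Lsum f h m' x'\<bar> \<le> \<epsilon> * V"
    by (rule Lsum_refine_bound[OF P(2) ab mesh(2) mc V d0 Y(1) _ Y(2)]) (auto simp: Y_def)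
  show ?thesis using 1 2 by linarith
qed

lemma tag_bound:
  assumes P: "partn a b m x" and ab: "-1 \<le> a" "b \<le> 1"
    and mesh: "\<forall>i<m. x (Suc i) - x i \<le> \<delta>" and tag: "\<forall>i<m. x i \<le> \<xi> i \<and> \<xi> i \<le> x (Suc i)"
    and mc: "modc f a b \<delta> \<epsilon>" and V: "VB h V" and d0: "\<delta> \<ge> 0"
  shows "\<bar>(\<Sum>i<m. f (\<xi> i) * (h (x (Suc i)) - h (x i))) - Lsum f h m x\<bar> \<le> \<epsilon> * V"
proof -
  have "a \<in> {a..b}" using partn_range[OF P, of 0] P unfolding partn_def by auto
  hence e0: "\<epsilon> \<ge> 0" using modc_nonneg[OF mc d0] by simp
  have "\<bar>(\<Sum>i<m. f (\<xi> i) * (h (x (Suc i)) - h (x i))) - Lsum f h m x\<bar>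
      = \<bar>\<Sum>i<m. (f (\<xi> i) - f (x i)) * (h (x (Suc i)) - h (x i))\<bar>"
    by (simp only: Lsum_def sum_subtractf[symmetric] left_diff_distrib)
  also have "\<dots> \<le> (\<Sum>i<m. \<bar>(f (\<xi> i) - f (x i)) * (h (x (Suc i)) - h (x i))\<bar>)" by (rule sum_abs)
  also have "\<dots> \<le> (\<Sum>i<m. \<epsilon> * \<bar>h (x (Suc i)) - h (x i)\<bar>)"
  proof (rule sum_mono)
    fix i assume i: "i \<in> {..<m}"
    have r: "x i \<in> {a..b}" "x (Suc i) \<in> {a..b}" using partn_range[OF P] i by auto
    have t: "x i \<le> \<xi> i" "\<xi> i \<le> x (Suc i)" "x (Suc i) - x i \<le> \<delta>" using tag mesh i by auto
    have "\<bar>f (\<xi> i) - f (x i)\<bar> \<le> \<epsilon>"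
      by (rule mc[unfolded modc_def, rule_format, of "\<xi> i" "x i"]) (use r t in auto)
    then show "\<bar>(f (\<xi> i) - f (x i)) * (h (x (Suc i)) - h (x i))\<bar> \<le> \<epsilon> * \<bar>h (x (Suc i)) - h (x i)\<bar>"
      by (simp add: abs_mult mult_right_mono)
  qed
  also have "\<dots> = \<epsilon> * (\<Sum>i<m. \<bar>h (x (Suc i)) - h (x i)\<bar>)" by (simp add: sum_distrib_left)
  also have "\<dots> \<le> \<epsilon> * V"
  proof -
    have r1: "\<forall>i\<le>m. x i \<in> {-1..1}"
    proof (intro allI impI)
      fix i assume "i \<le> m" then have "x i \<in> {a..b}" by (rule partn_range[OF P])
      then show "x i \<in> {-1..1}" using ab by auto
    qed
    have r2: "\<forall>i<m. x i \<le> x (Suc i)" using P unfolding partn_def by blast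
    have "(\<Sum>i<m. \<bar>h (x (Suc i)) - h (x i)\<bar>) \<le> V"
      using V r1 r2 unfolding VB_def by blast
    then show ?thesis using e0 by (simp add: mult_left_mono)
  qed
  finally show ?thesis .
qed

definition ux :: "real \<Rightarrow> real \<Rightarrow> nat \<Rightarrow> nat \<Rightarrow> real" where
  "ux a b N i = a + (b - a) * real i / real N"

lemma ux_partn: "a \<le> b \<Longrightarrow> N > 0 \<Longrightarrow> partn a b N (ux a b N)"
  unfolding partn_def ux_def by (auto simp: divide_right_mono mult_left_mono)

lemma ux_mesh: "\<forall>i<N. ux a b N (Suc i) - ux a b N i \<le> (b - a) / real N"
  unfolding ux_def by (auto simp: field_simps)

lemma mesh_small:
  assumes "\<delta> > 0" shows "\<exists>N0. \<forall>N\<ge>N0. (c::real) / real (Suc N) \<le> \<delta>"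
proof -
  obtain N0 where N0: "\<bar>c\<bar> / \<delta> < real N0" using reals_Archimedean2 by blast
  have "c / real (Suc N) \<le> \<delta>" if "N \<ge> N0" for N
  proof -
    have "\<bar>c\<bar> < \<delta> * real N0" using N0 assms by (simp add: field_simps)
    also have "\<dots> \<le> \<delta> * real (Suc N)" using that assms by (intro mult_left_mono) auto
    finally show ?thesis using assms by (simp add: field_simps)
  qed
  then show ?thesis by blast
qed

lemma uc_modc:
  assumes "continuous_on {a..b} f" "e > 0"
  shows "\<exists>\<delta>>0. modc f a b \<delta> e"
proof -
  have "uniformly_continuous_on {a..b} f" using assms(1) by (rule compact_uniformly_continuous) simp
  then obtain d where d: "d > 0" "\<forall>u\<in>{a..b}. \<forall>v\<in>{a..b}. dist v u < d \<longrightarrow> dist (f v) (f u) < e"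
    using assms(2) unfolding uniformly_continuous_on_def by blast
  have "modc f a b (d/2) e" unfolding modc_def
  proof (intro allI impI)
    fix u v assume "u \<in> {a..b}" "v \<in> {a..b}" "\<bar>u - v\<bar> \<le> d/2"
    then have "dist (f u) (f v) < e" using d by (auto simp: dist_real_def)
    then show "\<bar>f u - f v\<bar> \<le> e" by (simp add: dist_real_def)
  qed
  then show ?thesis using d by (intro exI[of _ "d/2"]) auto
qed

definition LU :: "(real \<Rightarrow> real) \<Rightarrow> (real \<Rightarrow> real) \<Rightarrow> real \<Rightarrow> real \<Rightarrow> nat \<Rightarrow> real" where
  "LU f h a b N = Lsum f h (Suc N) (ux a b (Suc N))"

lemma rs_imp_LU:
  assumes "a < b" "has_rs_integral f h a b J"
  shows "LU f h a b \<longlonglongrightarrow> J"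
proof (rule LIMSEQ_I)
  fix e :: real assume e: "e > 0"
  obtain \<delta> where d: "\<delta> > 0" and D: "\<And>m x \<xi>. x 0 = a \<and> x m = b \<and> (\<forall>i<m. x i \<le> \<xi> i \<and> \<xi> i \<le> x (Suc i) \<and> x (Suc i) - x i < \<delta>) \<Longrightarrow>
        \<bar>(\<Sum>i<m. f (\<xi> i) * (h (x (Suc i)) - h (x i))) - J\<bar> < e"
    using assms(2) e unfolding has_rs_integral_def by meson
  have d2: "\<delta>/2 > 0" using d by simp
  from mesh_small[OF d2, of "b - a"] obtain N0 where N0: "\<forall>N\<ge>N0. (b - a) / real (Suc N) \<le> \<delta>/2" by blast
  have "\<bar>LU f h a b N - J\<bar> < e" if "N \<ge> N0" for N
  proof -
    have P: "partn a b (Suc N) (ux a b (Suc N))" using assms(1) by (intro ux_partn) auto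
    have "\<forall>i<Suc N. ux a b (Suc N) (Suc i) - ux a b (Suc N) i < \<delta>"
    proof (intro allI impI)
      fix i assume "i < Suc N"
      then have "ux a b (Suc N) (Suc i) - ux a b (Suc N) i \<le> (b - a) / real (Suc N)" using ux_mesh by blast
      moreover have "(b - a) / real (Suc N) \<le> \<delta>/2" using N0 that by blast
      ultimately show "ux a b (Suc N) (Suc i) - ux a b (Suc N) i < \<delta>" using d by linarith
    qed
    then show ?thesis using D[of "ux a b (Suc N)" "Suc N" "ux a b (Suc N)"] P
      unfolding LU_def Lsum_def partn_def by auto
  qed
  then show "\<exists>N0. \<forall>N\<ge>N0. norm (LU f h a b N - J) < e" by auto
qed

lemma LU_bound:
  assumes ab: "a < b" "-1 \<le> a" "b \<le> 1" and V: "VB h V"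
    and d: "\<delta> > 0" and mc: "modc f a b \<delta> \<epsilon>"
    and P: "partn a b m x" and mesh: "\<forall>i<m. x (Suc i) - x i \<le> \<delta>"
    and tag: "\<forall>i<m. x i \<le> \<xi> i \<and> \<xi> i \<le> x (Suc i)"
  shows "\<exists>N0. \<forall>N\<ge>N0. \<bar>(\<Sum>i<m. f (\<xi> i) * (h (x (Suc i)) - h (x i))) - LU f h a b N\<bar> \<le> 3 * \<epsilon> * V"
proof -
  obtain N0 where N0: "\<forall>N\<ge>N0. (b - a) / real (Suc N) \<le> \<delta>" using mesh_small[OF d] by auto
  have "\<bar>(\<Sum>i<m. f (\<xi> i) * (h (x (Suc i)) - h (x i))) - LU f h a b N\<bar> \<le> 3 * \<epsilon> * V" if "N \<ge> N0" for N
  proof -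
    have P2: "partn a b (Suc N) (ux a b (Suc N))" using ab by (intro ux_partn) auto
    have m2: "\<forall>i<Suc N. ux a b (Suc N) (Suc i) - ux a b (Suc N) i \<le> \<delta>"
      using ux_mesh[of "Suc N" a b] N0 that by (meson order.trans)
    have 1: "\<bar>(\<Sum>i<m. f (\<xi> i) * (h (x (Suc i)) - h (x i))) - Lsum f h m x\<bar> \<le> \<epsilon> * V"
      by (rule tag_bound[OF P ab(2,3) mesh tag mc V]) (use d in auto)
    have 2: "\<bar>Lsum f h m x - LU f h a b N\<bar> \<le> 2 * \<epsilon> * V"
      unfolding LU_def by (rule Lsum_cmp[OF P P2 ab mesh m2 mc V]) (use d in auto)
    show ?thesis using 1 2 by linarith
  qed
  then show ?thesis by blast
qed

lemma rs_main:
  assumes ab: "a < b" "-1 \<le> a" "b \<le> 1" and fc: "continuous_on {a..b} f" and V: "VB h V" "V \<ge> 0"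
  shows "has_rs_integral f h a b (rs_integral f h a b)"
    and "\<And>\<delta> \<epsilon> m x \<xi>. \<delta> > 0 \<Longrightarrow> modc f a b \<delta> \<epsilon> \<Longrightarrow> partn a b m x \<Longrightarrow> (\<forall>i<m. x (Suc i) - x i \<le> \<delta>) \<Longrightarrow>
          (\<forall>i<m. x i \<le> \<xi> i \<and> \<xi> i \<le> x (Suc i)) \<Longrightarrow>
          \<bar>(\<Sum>i<m. f (\<xi> i) * (h (x (Suc i)) - h (x i))) - rs_integral f h a b\<bar> \<le> 3 * \<epsilon> * V"
proof -
  have Ca: "Cauchy (LU f h a b)"
  proof (rule CauchyI)
    fix e :: real assume e: "e > 0"
    define e' where "e' = e / (2 * V + 2)"
    have e': "e' > 0" "2 * e' * V < e" using e V unfolding e'_def by (auto simp: field_simps)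
    obtain \<delta> where d: "\<delta> > 0" "modc f a b \<delta> e'" using uc_modc[OF fc e'(1)] by blast
    obtain N0 where N0: "\<forall>N\<ge>N0. (b - a) / real (Suc N) \<le> \<delta>" using mesh_small[OF d(1)] by auto
    have "\<bar>LU f h a b N - LU f h a b M\<bar> < e" if "N \<ge> N0" "M \<ge> N0" for N M
    proof -
      have P1: "partn a b (Suc N) (ux a b (Suc N))" "partn a b (Suc M) (ux a b (Suc M))" using ab by (auto intro: ux_partn)
      have m1: "\<forall>i<Suc N. ux a b (Suc N) (Suc i) - ux a b (Suc N) i \<le> \<delta>"
        using ux_mesh[of "Suc N" a b] N0 that by (meson order.trans)
      have m2: "\<forall>i<Suc M. ux a b (Suc M) (Suc i) - ux a b (Suc M) i \<le> \<delta>"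
        using ux_mesh[of "Suc M" a b] N0 that by (meson order.trans)
      have "\<bar>LU f h a b N - LU f h a b M\<bar> \<le> 2 * e' * V"
        unfolding LU_def by (rule Lsum_cmp[OF P1 ab m1 m2 d(2) V(1)]) (use d in auto)
      then show ?thesis using e' by linarith
    qed
    then show "\<exists>M. \<forall>m\<ge>M. \<forall>n\<ge>M. norm (LU f h a b m - LU f h a b n) < e" by auto
  qed
  then obtain I where LI: "LU f h a b \<longlonglongrightarrow> I" using Cauchy_convergent_iff convergent_def by blast
  have bnd: "\<bar>(\<Sum>i<m. f (\<xi> i) * (h (x (Suc i)) - h (x i))) - I\<bar> \<le> 3 * \<epsilon> * V"
    if hyps: "\<delta> > 0" "modc f a b \<delta> \<epsilon>" "partn a b m x" "\<forall>i<m. x (Suc i) - x i \<le> \<delta>"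
       "\<forall>i<m. x i \<le> \<xi> i \<and> \<xi> i \<le> x (Suc i)" for \<delta> \<epsilon> m x \<xi>
  proof -
    obtain N0 where N0: "\<forall>N\<ge>N0. \<bar>(\<Sum>i<m. f (\<xi> i) * (h (x (Suc i)) - h (x i))) - LU f h a b N\<bar> \<le> 3 * \<epsilon> * V"
      using LU_bound[OF ab V(1) hyps] by blast
    have "(\<lambda>N. \<bar>(\<Sum>i<m. f (\<xi> i) * (h (x (Suc i)) - h (x i))) - LU f h a b N\<bar>) \<longlonglongrightarrow>
        \<bar>(\<Sum>i<m. f (\<xi> i) * (h (x (Suc i)) - h (x i))) - I\<bar>"
      by (intro tendsto_intros LI)
    then show ?thesis
      by (rule tendsto_upperbound) (use N0 in \<open>auto simp: eventually_sequentially\<close>)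
  qed
  have hI: "has_rs_integral f h a b I" unfolding has_rs_integral_def
  proof (intro allI impI)
    fix e :: real assume e: "e > 0"
    define e' where "e' = e / (6 * V + 6)"
    have den: "6 * V + 6 > 0" using V by simp
    have e'1: "e' > 0" using e den unfolding e'_def by simp
    have q: "3 * V / (6 * V + 6) < 1" using den V by (simp add: divide_less_eq)
    have "3 * e' * V = e * (3 * V / (6 * V + 6))" unfolding e'_def by simp
    also have "\<dots> < e * 1" using q e by (intro mult_strict_left_mono) auto
    finally have e': "e' > 0" "3 * e' * V < e" using e'1 by auto
    obtain \<delta> where d: "\<delta> > 0" "modc f a b \<delta> e'" using uc_modc[OF fc e'(1)] by blast
    show "\<exists>\<delta>>0. \<forall>m x \<xi>. x 0 = a \<and> x m = b \<and> (\<forall>i<m. x i \<le> \<xi> i \<and> \<xi> i \<le> x (Suc i) \<and> x (Suc i) - x i < \<delta>) \<longrightarrow>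
        \<bar>(\<Sum>i<m. f (\<xi> i) * (h (x (Suc i)) - h (x i))) - I\<bar> < e"
    proof (intro exI[of _ \<delta>] conjI allI impI)
      fix m x \<xi> assume H: "x 0 = a \<and> x m = b \<and> (\<forall>i<m. x i \<le> \<xi> i \<and> \<xi> i \<le> x (Suc i) \<and> x (Suc i) - x i < \<delta>)"
      have P: "partn a b m x" using H unfolding partn_def by force
      have "\<bar>(\<Sum>i<m. f (\<xi> i) * (h (x (Suc i)) - h (x i))) - I\<bar> \<le> 3 * e' * V"
        by (rule bnd[OF d P]) (use H in \<open>auto simp: less_imp_le\<close>)
      then show "\<bar>(\<Sum>i<m. f (\<xi> i) * (h (x (Suc i)) - h (x i))) - I\<bar> < e" using e' by linarith
    qed (use d in auto)
  qed
  have eq: "rs_integral f h a b = I"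
    unfolding rs_integral_def
  proof (rule the_equality)
    show "has_rs_integral f h a b I" by (rule hI)
    fix J assume "has_rs_integral f h a b J"
    then have "LU f h a b \<longlonglongrightarrow> J" using rs_imp_LU ab by blast
    then show "J = I" using LI LIMSEQ_unique by blast
  qed
  show "has_rs_integral f h a b (rs_integral f h a b)" using hI eq by simp
  show "\<And>\<delta> \<epsilon> m x \<xi>. \<delta> > 0 \<Longrightarrow> modc f a b \<delta> \<epsilon> \<Longrightarrow> partn a b m x \<Longrightarrow> (\<forall>i<m. x (Suc i) - x i \<le> \<delta>) \<Longrightarrow>
          (\<forall>i<m. x i \<le> \<xi> i \<and> \<xi> i \<le> x (Suc i)) \<Longrightarrow>
          \<bar>(\<Sum>i<m. f (\<xi> i) * (h (x (Suc i)) - h (x i))) - rs_integral f h a b\<bar> \<le> 3 * \<epsilon> * V"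
    using bnd eq by simp
qed

lemma VB_two:
  assumes "VB h V" "-1 \<le> u" "u \<le> v" "v \<le> 1"
  shows "\<bar>h v - h u\<bar> \<le> V"
proof -
  define y :: "nat \<Rightarrow> real" where "y i = (if i = 0 then u else v)" for i
  have "(\<Sum>i<Suc 0. \<bar>h (y (Suc i)) - h (y i)\<bar>) \<le> V"
    using assms(1) unfolding VB_def
    by (erule_tac x="Suc 0" in allE, erule_tac x=y in allE) (use assms in \<open>auto simp: y_def\<close>)
  then show ?thesis by (simp add: y_def)
qed

lemma rs_compare:
  fixes Bf h :: "real \<Rightarrow> real" and n k :: nat
  assumes n: "n \<ge> 1" and kn: "k < n" and k1: "real k \<le> real n * t" and k2: "real n * t < real k + 1"
    and t: "0 < t" "t < 1" and V: "VB h V" "V \<ge> 0" and hz: "\<forall>x\<in>{-1..0}. h x = 0"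
    and Bc: "continuous_on {0..1} Bf" and B0: "Bf 0 = 0" and mc: "modc Bf 0 1 (2 / real n) \<epsilon>"
  shows "\<bar>(\<Sum>i<n. (h ((real (Suc i) - real k) / real n) - h ((real i - real k) / real n)) * Bf (1 - real i / real n))
          - rs_integral (\<lambda>y. Bf (1 - t - y)) h 0 (1 - t)\<bar> \<le> 5 * \<epsilon> * V"
proof -
  have np: "real n > 0" using n by simp
  have e0: "\<epsilon> \<ge> 0" using modc_nonneg[OF mc] np by simp
  define F where "F i = (h ((real (Suc i) - real k) / real n) - h ((real i - real k) / real n)) * Bf (1 - real i / real n)" for i
  define m' where "m' = n - k - 1"
  define m where "m = Suc m'"
  have mnk: "m = n - k" "m' + k + 1 = n" using kn unfolding m_def m'_def by auto
  have F0: "F i = 0" if "i < k" for i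
  proof -
    have "(real (Suc i) - real k) / real n \<in> {-1..0}" "(real i - real k) / real n \<in> {-1..0}"
      using that kn np by (auto simp: field_simps)
    then show ?thesis unfolding F_def using hz by simp
  qed
  have "(\<Sum>i<n. F i) = (\<Sum>i<k. F i) + (\<Sum>i=k..<n. F i)"
    using kn by (metis atLeast0LessThan less_imp_le_nat sum.atLeastLessThan_concat zero_le)
  also have "(\<Sum>i<k. F i) = 0" using F0 by simp
  also have "(\<Sum>i=k..<n. F i) = (\<Sum>j<m. F (j + k))"
  proof -
    have "(\<Sum>i=0+k..<m+k. F i) = (\<Sum>j=0..<m. F (j + k))" by (rule sum.shift_bounds_nat_ivl)
    then show ?thesis using mnk kn by (simp add: atLeast0LessThan)
  qed
  finally have Fsum: "(\<Sum>i<n. F i) = (\<Sum>j<m. F (j + k))" by simp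
  define H where "H j = (h (real (Suc j) / real n) - h (real j / real n)) * Bf (1 - real (j + k) / real n)" for j
  have FH: "F (j + k) = H j" for j unfolding F_def H_def by (simp add: algebra_simps)
  define x where "x j = (if j < m then real j / real n else 1 - t)" for j
  define f where "f y = Bf (1 - t - y)" for y
  have ktn: "real m' / real n < 1 - t" "1 - t - real m' / real n \<le> 1 / real n"
  proof -
    have rm: "real m' = real n - real k - 1" using mnk by linarith
    have eq2: "1 - t - real m' / real n = (real k + 1 - real n * t) / real n"
      unfolding rm using np by (simp add: field_simps)
    have "real k + 1 - real n * t > 0" "real k + 1 - real n * t \<le> 1" using k1 k2 by auto
    then have "(real k + 1 - real n * t) / real n > 0" "(real k + 1 - real n * t) / real n \<le> 1 / real n"
      using np by (auto simp: divide_right_mono)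
    then show "real m' / real n < 1 - t" "1 - t - real m' / real n \<le> 1 / real n" unfolding eq2[symmetric] by auto
  qed
  have P: "partn 0 (1 - t) m x"
    unfolding partn_def
  proof (intro conjI allI impI)
    show "x 0 = 0" unfolding x_def m_def by simp
    show "x m = 1 - t" unfolding x_def by simp
    fix j assume j: "j < m"
    show "x j \<le> x (Suc j)"
    proof (cases "Suc j < m")
      case True then show ?thesis using j np unfolding x_def by (simp add: divide_right_mono)
    next
      case False then have "j = m'" using j unfolding m_def by simp
      then show ?thesis using j ktn unfolding x_def by (simp add: m_def)
    qed
  qed
  have mesh: "\<forall>j<m. x (Suc j) - x j \<le> 1 / real n"
  proof (intro allI impI)
    fix j assume j: "j < m"
    show "x (Suc j) - x j \<le> 1 / real n"
    proof (cases "Suc j < m")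
      case True then show ?thesis using j np unfolding x_def by (simp add: diff_divide_distrib[symmetric])
    next
      case False then have "j = m'" using j unfolding m_def by simp
      then show ?thesis using j ktn unfolding x_def by (simp add: m_def)
    qed
  qed
  have fc: "continuous_on {0..1-t} f"
    unfolding f_def
    by (rule continuous_on_compose2[OF Bc]) (use t in \<open>auto intro!: continuous_intros\<close>)
  have mcf: "modc f 0 (1 - t) (1 / real n) \<epsilon>"
    unfolding modc_def
  proof (intro allI impI)
    fix u v assume uv: "u \<in> {0..1-t}" "v \<in> {0..1-t}" "\<bar>u - v\<bar> \<le> 1 / real n"
    have "1 / real n \<le> 2 / real n" using np by (simp add: divide_right_mono)
    then show "\<bar>f u - f v\<bar> \<le> \<epsilon>" unfolding f_def
      by (intro mc[unfolded modc_def, rule_format]) (use uv t in auto)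
  qed
  have dpos: "1 / real n > 0" using np by simp
  have RS: "\<bar>(\<Sum>j<m. f (x j) * (h (x (Suc j)) - h (x j))) - rs_integral f h 0 (1 - t)\<bar> \<le> 3 * \<epsilon> * V"
    by (rule rs_main(2)[OF _ _ _ fc V dpos mcf P mesh]) (use t P in \<open>auto simp: partn_def\<close>)
  have Bsmall: "\<bar>Bf s\<bar> \<le> \<epsilon>" if "0 \<le> s" "s \<le> 1 / real n" for s
  proof -
    have "1 / real n \<le> 2 / real n" using np by (simp add: divide_right_mono)
    moreover have "1 / real n \<le> 1" using n by simp
    ultimately have "\<bar>Bf s - Bf 0\<bar> \<le> \<epsilon>"
      by (intro mc[unfolded modc_def, rule_format]) (use that in auto)
    then show ?thesis using B0 by simp
  qed
  have cmpj: "\<bar>f (x j) * (h (x (Suc j)) - h (x j)) - H j\<bar> \<le> \<epsilon> * \<bar>h (x (Suc j)) - h (x j)\<bar>" if j: "j < m'" for j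
  proof -
    have xj: "x j = real j / real n" "x (Suc j) = real (Suc j) / real n" using j unfolding x_def m_def by auto
    have a1: "1 - t - real j / real n \<in> {0..1}"
    proof -
      have "real j + 2 \<le> real n - real k" using j mnk by linarith
      then show ?thesis using k2 t np by (auto simp: field_simps)
    qed
    have a2: "1 - real (j + k) / real n \<in> {0..1}" using j mnk np by (auto simp: field_simps)
    have eqd: "(1 - t - real j / real n) - (1 - real (j + k) / real n) = (real k - real n * t) / real n"
      using np by (simp add: field_simps)
    have "\<bar>real k - real n * t\<bar> \<le> 2" using k1 k2 by auto
    then have "\<bar>real k - real n * t\<bar> / real n \<le> 2 / real n" using np by (simp add: divide_right_mono)
    then have d: "\<bar>(1 - t - real j / real n) - (1 - real (j + k) / real n)\<bar> \<le> 2 / real n"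
      unfolding eqd by simp
    have AC: "\<bar>Bf (1 - t - real j / real n) - Bf (1 - real (j + k) / real n)\<bar> \<le> \<epsilon>"
      by (rule mc[unfolded modc_def, rule_format, OF a1 a2 d])
    define A where "A = Bf (1 - t - real j / real n)"
    define C where "C = Bf (1 - real (j + k) / real n)"
    define Dl where "Dl = h (real (Suc j) / real n) - h (real j / real n)"
    have "\<bar>A * Dl - Dl * C\<bar> = \<bar>A - C\<bar> * \<bar>Dl\<bar>" by (simp add: algebra_simps abs_mult[symmetric])
    also have "\<dots> \<le> \<epsilon> * \<bar>Dl\<bar>" using AC unfolding A_def C_def by (intro mult_right_mono) auto
    finally show ?thesis unfolding xj H_def f_def A_def C_def Dl_def .
  qed
  have last: "\<bar>f (x m') * (h (x (Suc m')) - h (x m')) - H m'\<bar> \<le> \<epsilon> * \<bar>h (x (Suc m')) - h (x m')\<bar> + \<epsilon> * V"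
  proof -
    have xm: "x m' = real m' / real n" "x (Suc m') = 1 - t" unfolding x_def m_def by auto
    have f1: "\<bar>f (x m')\<bar> \<le> \<epsilon>" unfolding xm f_def by (rule Bsmall) (use ktn in auto)
    have hb: "1 - real (m' + k) / real n = 1 / real n"
    proof -
      have "real (m' + k) = real n - 1" using mnk by linarith
      then show ?thesis using np by (simp add: field_simps)
    qed
    have f2: "\<bar>Bf (1 - real (m' + k) / real n)\<bar> \<le> \<epsilon>" unfolding hb by (rule Bsmall) auto
    have hv: "\<bar>h (real (Suc m') / real n) - h (real m' / real n)\<bar> \<le> V"
    proof (rule VB_two[OF V(1)])
      have "0 \<le> real m' / real n" using np by simp
      then show "-1 \<le> real m' / real n" by linarith
      show "real m' / real n \<le> real (Suc m') / real n" using np by (simp add: divide_right_mono)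
      show "real (Suc m') / real n \<le> 1" using mnk np by (simp add: field_simps)
    qed
    have "\<bar>f (x m') * (h (x (Suc m')) - h (x m')) - H m'\<bar>
        \<le> \<bar>f (x m')\<bar> * \<bar>h (x (Suc m')) - h (x m')\<bar> + \<bar>Bf (1 - real (m' + k) / real n)\<bar> * \<bar>h (real (Suc m') / real n) - h (real m' / real n)\<bar>"
      unfolding H_def by (simp add: abs_mult[symmetric] abs_triangle_ineq4 mult.commute)
    also have "\<dots> \<le> \<epsilon> * \<bar>h (x (Suc m')) - h (x m')\<bar> + \<epsilon> * V"
      by (intro add_mono mult_mono f1 f2 hv) (use e0 in auto)
    finally show ?thesis .
  qed
  have varx: "(\<Sum>j<m. \<bar>h (x (Suc j)) - h (x j)\<bar>) \<le> V"
  proof -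
    have "\<forall>j\<le>m. x j \<in> {-1..1}"
    proof (intro allI impI)
      fix j assume "j \<le> m" then have "x j \<in> {0..1-t}" by (rule partn_range[OF P])
      then show "x j \<in> {-1..1}" using t by auto
    qed
    moreover have "\<forall>j<m. x j \<le> x (Suc j)" using P unfolding partn_def by blast
    ultimately show ?thesis using V(1) unfolding VB_def by blast
  qed
  have "\<bar>(\<Sum>j<m. f (x j) * (h (x (Suc j)) - h (x j))) - (\<Sum>j<m. H j)\<bar>
      = \<bar>(\<Sum>j<m'. f (x j) * (h (x (Suc j)) - h (x j)) - H j) + (f (x m') * (h (x (Suc m')) - h (x m')) - H m')\<bar>"
    unfolding m_def by (simp add: sum_subtractf)
  also have "\<dots> \<le> (\<Sum>j<m'. \<bar>f (x j) * (h (x (Suc j)) - h (x j)) - H j\<bar>) + \<bar>f (x m') * (h (x (Suc m')) - h (x m')) - H m'\<bar>"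
    by (rule order.trans[OF abs_triangle_ineq add_mono[OF sum_abs order_refl]])
  also have "\<dots> \<le> (\<Sum>j<m'. \<epsilon> * \<bar>h (x (Suc j)) - h (x j)\<bar>) + (\<epsilon> * \<bar>h (x (Suc m')) - h (x m')\<bar> + \<epsilon> * V)"
    by (intro add_mono sum_mono cmpj last) auto
  also have "\<dots> = \<epsilon> * (\<Sum>j<m. \<bar>h (x (Suc j)) - h (x j)\<bar>) + \<epsilon> * V"
    unfolding m_def by (simp add: sum_distrib_left distrib_left)
  also have "\<dots> \<le> \<epsilon> * V + \<epsilon> * V" using mult_left_mono[OF varx e0] by (simp add: mult.commute)
  finally have cmp: "\<bar>(\<Sum>j<m. f (x j) * (h (x (Suc j)) - h (x j))) - (\<Sum>j<m. H j)\<bar> \<le> 2 * \<epsilon> * V" by (simp add: mult.commute mult.left_commute)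
  have "(\<Sum>i<n. F i) = (\<Sum>j<m. H j)" using Fsum FH by simp
  then have "\<bar>(\<Sum>i<n. F i) - rs_integral f h 0 (1 - t)\<bar> \<le> 5 * \<epsilon> * V" using RS cmp by linarith
  then show ?thesis unfolding F_def f_def .
qed


lemma abel_sum:
  fixes a T :: "nat \<Rightarrow> real"
  shows "(\<Sum>i<n. a (Suc i) * (T (Suc i) - T i)) = a n * T n - a 0 * T 0 - (\<Sum>i<n. (a (Suc i) - a i) * T i)"
  by (induction n) (simp_all add: algebra_simps)

lemma sum_1n: "(\<Sum>i=1..n. g i) = (\<Sum>i<n. g (Suc i))"
  by (induction n) (simp_all add: sum.atLeast_Suc_atMost_Suc_shift)

lemma aux_alg:
  fixes s q c y x i :: real
  assumes "s * q = - c * y"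
  shows "c * (- x) - s * i = c * (y - x) + s * (q - i)"
proof -
  have "c * (y - x) + s * (q - i) = c * y - c * x + s * q - s * i" by (simp add: algebra_simps)
  then show ?thesis using assms by simp
qed

lemma det_main:
  fixes e :: "nat \<Rightarrow> real" and w Bf h :: "real \<Rightarrow> real" and n :: nat and t lam V D \<epsilon> :: real
  assumes n: "n \<ge> 1" and t: "0 < t" "t < 1" and lam: "lam \<ge> 0" and V: "VB h V" "V \<ge> 0"
    and hz: "\<forall>x\<in>{-1..0}. h x = 0"
    and Bc: "continuous_on {0..1} Bf" and B0: "Bf 0 = 0" and mc: "modc Bf 0 1 (2 / real n) \<epsilon>"
    and hB: "\<forall>i\<le>n. Bf (1 - real i / real n) = - (w (real i) - real i / real n * w (real n)) / sqrt (real n)"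
    and w0: "w 0 = 0"
    and Dk: "\<forall>k\<in>{1..n}. \<bar>(\<Sum>i=1..k. e i) - sqrt lam * w (real k)\<bar> \<le> D"
  shows "\<bar>(1 / sqrt (real n)) * (\<Sum>i=1..n. h (real_of_int (int i - \<lfloor>real n * t\<rfloor>) / real n) *
            (e i - (1 / real n) * (\<Sum>l=1..n. e l)))
          - sqrt lam * rs_integral (\<lambda>y. Bf (1 - t - y)) h 0 (1 - t)\<bar>
        \<le> 2 * V * D / sqrt (real n) + 5 * sqrt lam * \<epsilon> * V"
proof -
  have np: "real n > 0" using n by simp
  have sp: "sqrt (real n) > 0" using np by simp
  have fl0: "\<lfloor>real n * t\<rfloor> \<ge> 0" using np t by simp
  define k where "k = nat \<lfloor>real n * t\<rfloor>"
  have rk: "real k = real_of_int \<lfloor>real n * t\<rfloor>" unfolding k_def using fl0 by simp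
  have k1: "real k \<le> real n * t" and k2: "real n * t < real k + 1" unfolding rk by linarith+
  have kn: "k < n"
  proof -
    have "real n * t < real n" using np t by simp
    then have "real k < real n" using k1 by linarith
    then show ?thesis by simp
  qed
  define a where "a i = h ((real i - real k) / real n)" for i
  have ha: "h (real_of_int (int i - \<lfloor>real n * t\<rfloor>) / real n) = a i" for i
    unfolding a_def using rk by simp
  define S where "S j = (\<Sum>i=1..j. e i)" for j
  define T where "T j = S j - real j / real n * S n" for j
  define U where "U j = sqrt lam * (w (real j) - real j / real n * w (real n))" for j
  have S0: "S 0 = 0" unfolding S_def by simp
  have T0: "T 0 = 0" and Tn: "T n = 0" unfolding T_def using S0 np by auto
  have eT: "e (Suc i) - (1 / real n) * S n = T (Suc i) - T i" for i
    unfolding T_def S_def by (simp add: field_simps add_divide_distrib)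
  have LHS: "(\<Sum>i=1..n. h (real_of_int (int i - \<lfloor>real n * t\<rfloor>) / real n) * (e i - (1 / real n) * (\<Sum>l=1..n. e l)))
      = - (\<Sum>i<n. (a (Suc i) - a i) * T i)"
  proof -
    have "(\<Sum>i=1..n. h (real_of_int (int i - \<lfloor>real n * t\<rfloor>) / real n) * (e i - (1 / real n) * (\<Sum>l=1..n. e l)))
        = (\<Sum>i<n. a (Suc i) * (T (Suc i) - T i))"
    proof -
      have "(\<Sum>l=1..n. e l) = S n" unfolding S_def ..
      then have "(\<Sum>i=1..n. h (real_of_int (int i - \<lfloor>real n * t\<rfloor>) / real n) * (e i - (1 / real n) * (\<Sum>l=1..n. e l)))
          = (\<Sum>i=1..n. a i * (e i - (1 / real n) * S n))" unfolding ha by simp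
      also have "\<dots> = (\<Sum>i<n. a (Suc i) * (e (Suc i) - (1 / real n) * S n))" by (rule sum_1n)
      also have "\<dots> = (\<Sum>i<n. a (Suc i) * (T (Suc i) - T i))" unfolding eT ..
      finally show ?thesis .
    qed
    also have "\<dots> = - (\<Sum>i<n. (a (Suc i) - a i) * T i)" unfolding abel_sum T0 Tn by simp
    finally show ?thesis .
  qed
  define Q where "Q = (\<Sum>i<n. (h ((real (Suc i) - real k) / real n) - h ((real i - real k) / real n)) * Bf (1 - real i / real n))"
  have RC: "\<bar>Q - rs_integral (\<lambda>y. Bf (1 - t - y)) h 0 (1 - t)\<bar> \<le> 5 * \<epsilon> * V"
    unfolding Q_def by (rule rs_compare[OF n kn k1 k2 t V hz Bc B0 mc])
  have sQ: "sqrt lam * Q = - (1 / sqrt (real n)) * (\<Sum>i<n. (a (Suc i) - a i) * U i)"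
  proof -
    have "sqrt lam * Q = (\<Sum>i<n. (a (Suc i) - a i) * (sqrt lam * Bf (1 - real i / real n)))"
      unfolding Q_def a_def by (simp add: sum_distrib_left algebra_simps)
    also have "\<dots> = (\<Sum>i<n. (a (Suc i) - a i) * (- U i / sqrt (real n)))"
      by (rule sum.cong) (use hB in \<open>auto simp: U_def algebra_simps\<close>)
    also have "\<dots> = - (1 / sqrt (real n)) * (\<Sum>i<n. (a (Suc i) - a i) * U i)"
      by (simp add: sum_distrib_left sum_negf)
    finally show ?thesis .
  qed
  have D0: "D \<ge> 0" using Dk n by (meson abs_ge_zero atLeastAtMost_iff order.trans order_refl)
  have TU: "\<bar>T i - U i\<bar> \<le> 2 * D" if "i \<le> n" for i
  proof (cases "i = 0")
    case True then show ?thesis using T0 w0 D0 unfolding U_def by simp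
  next
    case False
    have d1: "\<bar>S i - sqrt lam * w (real i)\<bar> \<le> D" using Dk that False unfolding S_def by auto
    have d2: "\<bar>S n - sqrt lam * w (real n)\<bar> \<le> D" using Dk n unfolding S_def by auto
    have r: "0 \<le> real i / real n" "real i / real n \<le> 1" using that np by auto
    have eq: "T i - U i = (S i - sqrt lam * w (real i)) - real i / real n * (S n - sqrt lam * w (real n))"
      unfolding T_def U_def by (simp add: algebra_simps)
    have h2: "\<bar>real i / real n * (S n - sqrt lam * w (real n))\<bar> \<le> 1 * D"
      unfolding abs_mult using r d2 D0 by (intro mult_mono) auto
    have "\<bar>T i - U i\<bar> \<le> D + 1 * D"
      unfolding eq by (rule order.trans[OF abs_triangle_ineq4 add_mono[OF d1 h2]])
    then show ?thesis by simp
  qed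
  have varA: "(\<Sum>i<n. \<bar>a (Suc i) - a i\<bar>) \<le> V"
  proof -
    define x where "x i = (real i - real k) / real n" for i
    have "\<forall>i<n. x i \<le> x (Suc i)" unfolding x_def using np by (simp add: divide_right_mono)
    moreover have "\<forall>i\<le>n. x i \<in> {-1..1}" unfolding x_def using np kn by (auto simp: field_simps)
    ultimately have "(\<Sum>i<n. \<bar>h (x (Suc i)) - h (x i)\<bar>) \<le> V" using V(1) unfolding VB_def by blast
    then show ?thesis unfolding x_def a_def .
  qed
  have dsum: "\<bar>\<Sum>i<n. (a (Suc i) - a i) * (U i - T i)\<bar> \<le> 2 * D * V"
  proof -
    have "\<bar>\<Sum>i<n. (a (Suc i) - a i) * (U i - T i)\<bar> \<le> (\<Sum>i<n. \<bar>a (Suc i) - a i\<bar> * (2 * D))"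
    proof (rule order.trans[OF sum_abs sum_mono])
      fix i assume "i \<in> {..<n}"
      then have "\<bar>U i - T i\<bar> \<le> 2 * D" using TU[of i] by (simp add: abs_minus_commute)
      then show "\<bar>(a (Suc i) - a i) * (U i - T i)\<bar> \<le> \<bar>a (Suc i) - a i\<bar> * (2 * D)"
        unfolding abs_mult by (intro mult_left_mono) auto
    qed
    also have "\<dots> = (\<Sum>i<n. \<bar>a (Suc i) - a i\<bar>) * (2 * D)" by (simp add: sum_distrib_right)
    also have "\<dots> \<le> V * (2 * D)" using varA D0 by (intro mult_right_mono) auto
    finally show ?thesis by (simp add: algebra_simps)
  qed
  define I where "I = rs_integral (\<lambda>y. Bf (1 - t - y)) h 0 (1 - t)"
  have "(1 / sqrt (real n)) * (- (\<Sum>i<n. (a (Suc i) - a i) * T i)) - sqrt lam * I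
      = (1 / sqrt (real n)) * (\<Sum>i<n. (a (Suc i) - a i) * (U i - T i)) + sqrt lam * (Q - I)"
  proof -
    have dif: "(\<Sum>i<n. (a (Suc i) - a i) * (U i - T i)) = (\<Sum>i<n. (a (Suc i) - a i) * U i) - (\<Sum>i<n. (a (Suc i) - a i) * T i)"
      by (simp add: right_diff_distrib sum_subtractf)
    show ?thesis unfolding dif by (rule aux_alg[OF sQ])
  qed
  also have "\<bar>\<dots>\<bar> \<le> (1 / sqrt (real n)) * (2 * D * V) + sqrt lam * (5 * \<epsilon> * V)"
  proof (rule order.trans[OF abs_triangle_ineq add_mono])
    show "\<bar>1 / sqrt (real n) * (\<Sum>i<n. (a (Suc i) - a i) * (U i - T i))\<bar> \<le> 1 / sqrt (real n) * (2 * D * V)"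
      using mult_left_mono[OF dsum, of "1 / sqrt (real n)"] sp by (simp add: abs_mult)
    show "\<bar>sqrt lam * (Q - I)\<bar> \<le> sqrt lam * (5 * \<epsilon> * V)"
      using mult_left_mono[OF RC, of "sqrt lam"] lam unfolding I_def by (simp add: abs_mult)
  qed
  finally show ?thesis unfolding LHS I_def[symmetric] by (simp add: algebra_simps)
qed

definition dk :: "nat \<Rightarrow> real \<Rightarrow> nat" where
  "dk k u = nat \<lfloor>u * 2 ^ k\<rfloor>"

lemma dk_props:
  assumes "0 \<le> u" "u \<le> 1"
  shows "real (dk k u) \<le> u * 2 ^ k" "u * 2 ^ k < real (dk k u) + 1" "real (dk k u) / 2 ^ k \<in> {0..1}"
    "u - real (dk k u) / 2 ^ k < 1 / 2 ^ k" "dk k u \<le> 2 ^ k"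
proof -
  have nn: "\<lfloor>u * 2 ^ k\<rfloor> \<ge> 0" using assms by simp
  have r: "real (dk k u) = real_of_int \<lfloor>u * 2 ^ k\<rfloor>" unfolding dk_def using nn by simp
  show a: "real (dk k u) \<le> u * 2 ^ k" unfolding r by linarith
  show b: "u * 2 ^ k < real (dk k u) + 1" unfolding r by linarith
  have "u * 2 ^ k \<le> 2 ^ k" using assms by simp
  then have c: "real (dk k u) \<le> 2 ^ k" using a by linarith
  then show "real (dk k u) / 2 ^ k \<in> {0..1}" by simp
  have "u - real (dk k u) / 2 ^ k = (u * 2 ^ k - real (dk k u)) / 2 ^ k" by (simp add: field_simps)
  also have "\<dots> < 1 / 2 ^ k" using b by (intro divide_strict_right_mono) auto
  finally show "u - real (dk k u) / 2 ^ k < 1 / 2 ^ k" .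
  have "real (dk k u) \<le> real ((2::nat) ^ k)" using c by simp
  then show "dk k u \<le> 2 ^ k" by linarith
qed

lemma floor_double: "\<lfloor>2 * x\<rfloor> = 2 * \<lfloor>x\<rfloor> \<or> \<lfloor>2 * x\<rfloor> = 2 * \<lfloor>x\<rfloor> + 1"
proof -
  have "2 * \<lfloor>x\<rfloor> \<le> \<lfloor>2 * x\<rfloor>" by (simp add: le_floor_iff; linarith?)
  moreover have "\<lfloor>2 * x\<rfloor> < 2 * \<lfloor>x\<rfloor> + 2" by (simp add: floor_less_iff; linarith?)
  ultimately show ?thesis by linarith
qed

lemma dk_Suc:
  assumes "0 \<le> u" "u \<le> 1"
  shows "dk (Suc k) u = 2 * dk k u \<or> dk (Suc k) u = 2 * dk k u + 1"
proof -
  have nn: "\<lfloor>u * 2 ^ k\<rfloor> \<ge> 0" using assms by simp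
  have e: "u * 2 ^ Suc k = 2 * (u * 2 ^ k)" by simp
  show ?thesis using floor_double[of "u * 2 ^ k"] nn unfolding dk_def e by (auto simp: nat_mult_distrib nat_add_distrib)
qed

lemma chain_det:
  fixes f :: "real \<Rightarrow> real" and K :: nat
  assumes fc: "continuous_on {0..1} f"
    and inc: "\<forall>k\<ge>K. \<forall>j<2^k. \<bar>f (real (Suc j) / 2^k) - f (real j / 2^k)\<bar> \<le> (9/10)^k"
  shows "modc f 0 1 (1 / 2^K) (19 * (9/10)^K)"
proof -
  define \<theta> :: real where "\<theta> = 9/10"
  define g where "g k u = f (real (dk k u) / 2 ^ k)" for k u
  have stp: "\<bar>g (Suc k) u - g k u\<bar> \<le> \<theta> ^ Suc k" if u: "0 \<le> u" "u \<le> 1" and k: "k \<ge> K" for k u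
  proof -
    have e1: "real (dk k u) / 2 ^ k = real (2 * dk k u) / 2 ^ Suc k" by simp
    consider "dk (Suc k) u = 2 * dk k u" | "dk (Suc k) u = 2 * dk k u + 1" using dk_Suc[OF u] by blast
    then show ?thesis
    proof cases
      case 1 then show ?thesis unfolding g_def e1 \<theta>_def by simp
    next
      case 2
      have "dk (Suc k) u \<le> 2 ^ Suc k" by (rule dk_props(5)[OF u])
      then have j: "2 * dk k u < 2 ^ Suc k" using 2 by simp
      have H: "\<bar>f (real (Suc (2 * dk k u)) / 2^Suc k) - f (real (2 * dk k u) / 2^Suc k)\<bar> \<le> (9/10)^Suc k"
        by (rule inc[rule_format]) (use k j in auto)
      have G2: "g k u = f (real (2 * dk k u) / 2 ^ Suc k)" unfolding g_def e1 ..
      show ?thesis using H 2 unfolding G2 unfolding g_def \<theta>_def by simp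
    qed
  qed
  have partial: "\<bar>g N u - g K u\<bar> \<le> 10 * \<theta> ^ Suc K - 10 * \<theta> ^ Suc N" if u: "0 \<le> u" "u \<le> 1" and N: "K \<le> N" for N u
    using N
  proof (induction N rule: dec_induct)
    case base then show ?case by simp
  next
    case (step N)
    have "\<bar>g (Suc N) u - g K u\<bar> \<le> \<bar>g N u - g K u\<bar> + \<bar>g (Suc N) u - g N u\<bar>" by linarith
    also have "\<dots> \<le> (10 * \<theta> ^ Suc K - 10 * \<theta> ^ Suc N) + \<theta> ^ Suc N"
      using step.IH \<open>0 \<le> u\<close> \<open>u \<le> 1\<close> step.hyps by (intro add_mono stp) auto
    also have "\<dots> = 10 * \<theta> ^ Suc K - 10 * \<theta> ^ Suc (Suc N)" unfolding \<theta>_def by simp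
    finally show ?case .
  qed
  have tail: "\<bar>f u - g K u\<bar> \<le> 9 * \<theta> ^ K" if u: "0 \<le> u" "u \<le> 1" for u
  proof -
    have lim0: "(\<lambda>N. real (dk N u) / 2 ^ N - u) \<longlonglongrightarrow> 0"
    proof (rule Lim_null_comparison)
      show "\<forall>\<^sub>F N in sequentially. norm (real (dk N u) / 2 ^ N - u) \<le> inverse (2 ^ N)"
      proof (intro always_eventually allI)
        fix N
        have a: "real (dk N u) / 2^N \<le> u" using dk_props(1)[OF u, of N] by (simp add: divide_le_eq)
        have b: "u - real (dk N u) / 2 ^ N < 1 / 2 ^ N" by (rule dk_props(4)[OF u])
        show "norm (real (dk N u) / 2 ^ N - u) \<le> inverse (2 ^ N)"
          using a b by (simp add: inverse_eq_divide)
      qed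
      show "(\<lambda>N. inverse ((2::real) ^ N)) \<longlonglongrightarrow> 0" by (rule LIMSEQ_inverse_realpow_zero) simp
    qed
    have lim: "(\<lambda>N. real (dk N u) / 2 ^ N) \<longlonglongrightarrow> u" by (rule LIM_zero_cancel[OF lim0])
    have "(\<lambda>N. f (real (dk N u) / 2 ^ N)) \<longlonglongrightarrow> f u"
      by (rule continuous_on_tendsto_compose[OF fc lim]) (use u dk_props[OF u] in auto)
    then have "(\<lambda>N. \<bar>g N u - g K u\<bar>) \<longlonglongrightarrow> \<bar>f u - g K u\<bar>" unfolding g_def by (intro tendsto_intros)
    moreover have "\<forall>\<^sub>F N in sequentially. \<bar>g N u - g K u\<bar> \<le> 9 * \<theta> ^ K"
    proof (rule eventually_sequentiallyI[of K])
      fix N assume "K \<le> N"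
      then have "\<bar>g N u - g K u\<bar> \<le> 10 * \<theta> ^ Suc K - 10 * \<theta> ^ Suc N" using partial u by blast
      also have "\<dots> \<le> 10 * \<theta> ^ Suc K" unfolding \<theta>_def by simp
      also have "\<dots> = 9 * \<theta> ^ K" unfolding \<theta>_def by simp
      finally show "\<bar>g N u - g K u\<bar> \<le> 9 * \<theta> ^ K" .
    qed
    ultimately show ?thesis by (rule tendsto_upperbound) simp
  qed
  have mid: "\<bar>g K u - g K v\<bar> \<le> \<theta> ^ K" if uv: "0 \<le> u" "u \<le> v" "v \<le> 1" "v - u \<le> 1 / 2 ^ K" for u v
  proof -
    have u: "0 \<le> u" "u \<le> 1" and v: "0 \<le> v" "v \<le> 1" using uv by auto
    have "v * 2 ^ K - u * 2 ^ K \<le> 1" using uv(4) by (simp add: field_simps)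
    then have "real (dk K v) < real (dk K u) + 2" using dk_props(1,2)[OF u, of K] dk_props(1,2)[OF v, of K] by linarith
    moreover have "real (dk K u) \<le> real (dk K v)"
    proof -
      have "u * 2 ^ K \<le> v * 2 ^ K" using uv by simp
      then have "\<lfloor>u * 2 ^ K\<rfloor> \<le> \<lfloor>v * 2 ^ K\<rfloor>" by (rule floor_mono)
      then show ?thesis unfolding dk_def by simp
    qed
    ultimately consider "dk K v = dk K u" | "dk K v = Suc (dk K u)" by linarith
    then show ?thesis
    proof cases
      case 1 then show ?thesis unfolding g_def \<theta>_def by simp
    next
      case 2
      have "dk K v \<le> 2 ^ K" by (rule dk_props(5)[OF v])
      then have "dk K u < 2 ^ K" using 2 by simp
      then have "\<bar>f (real (Suc (dk K u)) / 2^K) - f (real (dk K u) / 2^K)\<bar> \<le> (9/10)^K" using inc by auto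
      then show ?thesis unfolding g_def \<theta>_def 2 by (simp add: abs_minus_commute)
    qed
  qed
  have main: "\<bar>f u - f v\<bar> \<le> 19 * \<theta> ^ K" if uv: "0 \<le> u" "u \<le> v" "v \<le> 1" "v - u \<le> 1 / 2 ^ K" for u v
  proof -
    have "\<bar>f u - f v\<bar> \<le> \<bar>f u - g K u\<bar> + \<bar>g K u - g K v\<bar> + \<bar>f v - g K v\<bar>" by linarith
    also have "\<dots> \<le> 9 * \<theta> ^ K + \<theta> ^ K + 9 * \<theta> ^ K"
      using uv by (intro add_mono tail mid) auto
    finally show ?thesis by simp
  qed
  show ?thesis unfolding modc_def
  proof (intro allI impI)
    fix u v :: real assume a: "u \<in> {0..1}" "v \<in> {0..1}" "\<bar>u - v\<bar> \<le> 1 / 2 ^ K"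
    show "\<bar>f u - f v\<bar> \<le> 19 * (9 / 10) ^ K"
    proof (cases "u \<le> v")
      case True then show ?thesis using main[of u v] a unfolding \<theta>_def by auto
    next
      case False then show ?thesis using main[of v u] a unfolding \<theta>_def by (auto simp: abs_minus_commute)
    qed
  qed
qed

lemma normal_tail4:
  assumes P: "prob_space M" and N: "normal_rv M X 0 s2" and s: "s2 \<ge> 0" and a: "a > 0"
  shows "measure M {\<omega>\<in>space M. a < \<bar>X \<omega>\<bar>} \<le> 3 * s2^2 / a^4"
proof -
  interpret prob_space M by (rule P)
  have Xm[measurable]: "X \<in> borel_measurable M" using N unfolding normal_rv_def by simp
  have Sm: "{\<omega>\<in>space M. a < \<bar>X \<omega>\<bar>} \<in> sets M" by measurable
  show ?thesis
  proof (cases "s2 = 0")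
    case True
    then have "AE \<omega> in M. X \<omega> = 0" using N unfolding normal_rv_def by simp
    then have ae: "AE \<omega> in M. \<not> (a < \<bar>X \<omega>\<bar>)" by eventually_elim (use a in auto)
    have "emeasure M {\<omega>\<in>space M. a < \<bar>X \<omega>\<bar>} = 0"
      using AE_iff_measurable[OF Sm, of "\<lambda>\<omega>. \<not> (a < \<bar>X \<omega>\<bar>)"] ae by simp
    then have "measure M {\<omega>\<in>space M. a < \<bar>X \<omega>\<bar>} = 0" by (simp add: emeasure_eq_measure)
    then show ?thesis using True by simp
  next
    case False
    define \<sigma> where "\<sigma> = sqrt s2"
    have sp: "\<sigma> > 0" using s False unfolding \<sigma>_def by simp
    have D: "distributed M lborel X (\<lambda>x. ennreal (normal_density 0 \<sigma> x))"
      using N False unfolding normal_rv_def \<sigma>_def by simp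
    have g: "(\<lambda>x::real. x ^ 4) \<in> borel_measurable lborel" by measurable
    have "integrable lborel (\<lambda>x. normal_density 0 \<sigma> x * (x - 0) ^ 4)"
      using integrable_normal_moment[where k=4 and \<mu>=0 and \<sigma>=\<sigma>] sp by simp
    then have int: "integrable M (\<lambda>\<omega>. X \<omega> ^ 4)"
      using distributed_integrable[OF D g] by simp
    have "(\<integral>\<omega>. X \<omega> ^ 4 \<partial>M) = (\<integral>x. normal_density 0 \<sigma> x * x ^ 4 \<partial>lborel)"
      using distributed_integral[OF D g] by simp
    also have "\<dots> = fact (2 * 2) / ((2 / \<sigma>\<^sup>2) ^ 2 * fact 2)"
      using integral_normal_moment_even[where k=2 and \<mu>=0 and \<sigma>=\<sigma>] sp by simp
    also have "\<dots> = 3 * s2^2"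
      using sp s unfolding \<sigma>_def by (simp add: fact_numeral power2_eq_square field_simps)
    finally have E4: "(\<integral>\<omega>. X \<omega> ^ 4 \<partial>M) = 3 * s2^2" .
    have a4: "a ^ 4 > 0" using a by simp
    have "measure M {\<omega>\<in>space M. a ^ 4 \<le> X \<omega> ^ 4} \<le> (\<integral>\<omega>. X \<omega> ^ 4 \<partial>M) / a ^ 4"
      by (rule integral_Markov_inequality_measure[OF int sets.top _ a4]) (simp add: zero_le_even_power)
    moreover have "measure M {\<omega>\<in>space M. a < \<bar>X \<omega>\<bar>} \<le> measure M {\<omega>\<in>space M. a ^ 4 \<le> X \<omega> ^ 4}"
    proof (rule finite_measure_mono)
      show "{\<omega>\<in>space M. a < \<bar>X \<omega>\<bar>} \<subseteq> {\<omega>\<in>space M. a ^ 4 \<le> X \<omega> ^ 4}"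
      proof safe
        fix \<omega> assume "a < \<bar>X \<omega>\<bar>"
        then have "a ^ 4 \<le> \<bar>X \<omega>\<bar> ^ 4" using a by (intro power_mono) auto
        then show "a ^ 4 \<le> X \<omega> ^ 4" by (simp add: power_even_abs)
      qed
      show "{\<omega>\<in>space M. a ^ 4 \<le> X \<omega> ^ 4} \<in> sets M" by measurable
    qed
    ultimately show ?thesis using E4 by simp
  qed
qed


lemma bridge_incr:
  assumes B: "std_brownian_bridge M B" and u: "u \<in> {0..1}" and v: "v \<in> {0..1}"
  shows "normal_rv M (\<lambda>\<omega>. B v \<omega> - B u \<omega>) 0 (\<bar>v - u\<bar> - (v - u)^2)"
proof -
  define ts :: "nat \<Rightarrow> real" where "ts i = (if i = 0 then v else u)" for i
  define cs :: "nat \<Rightarrow> real" where "cs i = (if i = 0 then 1 else -1)" for i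
  have G: "centered_gaussian_process M {0..1} B (\<lambda>s t. min s t - s * t)"
    using B unfolding std_brownian_bridge_def by blast
  have "normal_rv M (\<lambda>\<omega>. \<Sum>i<2. cs i * B (ts i) \<omega>) 0
          (\<Sum>i<2. \<Sum>j<2. cs i * cs j * (min (ts i) (ts j) - ts i * ts j))"
    using G u v unfolding centered_gaussian_process_def ts_def by auto
  moreover have "(\<lambda>\<omega>. \<Sum>i<2. cs i * B (ts i) \<omega>) = (\<lambda>\<omega>. B v \<omega> - B u \<omega>)"
    by (simp add: numeral_2_eq_2 cs_def ts_def)
  moreover have "(\<Sum>i<2. \<Sum>j<2. cs i * cs j * (min (ts i) (ts j) - ts i * ts j)) = \<bar>v - u\<bar> - (v - u)^2"
    by (simp add: numeral_2_eq_2 cs_def ts_def min_def abs_if power2_eq_square algebra_simps)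
  ultimately show ?thesis by simp
qed

definition bad_ev :: "'a measure \<Rightarrow> (real \<Rightarrow> 'a \<Rightarrow> real) \<Rightarrow> nat \<Rightarrow> nat \<Rightarrow> 'a set" where
  "bad_ev M B L j = {\<omega>\<in>space M. (9/10)^L < \<bar>B (real (Suc j) / 2^L) \<omega> - B (real j / 2^L) \<omega>\<bar>}"

definition badset :: "'a measure \<Rightarrow> (real \<Rightarrow> 'a \<Rightarrow> real) \<Rightarrow> nat \<Rightarrow> 'a set" where
  "badset M B K = (\<Union>k. \<Union>j\<in>{..<2^(k+K)}. bad_ev M B (k + K) j)"

lemma bad_ev_bound:
  assumes P: "prob_space M" and B: "std_brownian_bridge M B" and j: "j < 2^L"
  shows "measure M (bad_ev M B L j) \<le> 3 * (1/2^L)^2 / ((9/10)^L)^4"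
proof -
  define u :: real where "u = real j / 2^L"
  define v :: real where "v = real (Suc j) / 2^L"
  have ju: "real (Suc j) \<le> 2^L" using j by (metis Suc_leI of_nat_le_iff of_nat_numeral of_nat_power)
  have uv: "u \<in> {0..1}" "v \<in> {0..1}" using ju j unfolding u_def v_def by (auto simp: less_imp_le)
  have d: "v - u = 1 / 2^L" unfolding u_def v_def by (simp add: diff_divide_distrib[symmetric])
  define s2 where "s2 = \<bar>v - u\<bar> - (v - u)^2"
  have s2: "0 \<le> s2" "s2 \<le> 1/2^L"
  proof -
    have "(1::real)/2^L \<le> 1" by simp
    then have "(1/2^L)^2 \<le> (1::real)/2^L" using mult_left_mono[OF \<open>(1::real)/2^L \<le> 1\<close>, of "1/2^L"] by (simp add: power2_eq_square)
    then show "0 \<le> s2" "s2 \<le> 1/2^L" unfolding s2_def d by auto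
  qed
  have "measure M (bad_ev M B L j) \<le> 3 * s2^2 / ((9/10)^L)^4"
    unfolding bad_ev_def u_def[symmetric] v_def[symmetric] s2_def
    by (rule normal_tail4[OF P bridge_incr[OF B uv(1) uv(2)] _ ]) (use s2(1)[unfolded s2_def] in auto)
  also have "\<dots> \<le> 3 * (1/2^L)^2 / ((9/10)^L)^4"
    using s2 by (intro divide_right_mono mult_left_mono power_mono) auto
  finally show ?thesis .
qed


lemma bridge_meas:
  assumes B: "std_brownian_bridge M B" and t: "t \<in> {0..1}"
  shows "B t \<in> borel_measurable M"
  using B t unfolding std_brownian_bridge_def centered_gaussian_process_def by blast

lemma bad_ev_sets:
  assumes B: "std_brownian_bridge M B" and j: "j < 2^L"
  shows "bad_ev M B L j \<in> sets M"
proof -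
  have ju: "real (Suc j) \<le> 2^L" using j by (metis Suc_leI of_nat_le_iff of_nat_numeral of_nat_power)
  have m1[measurable]: "B (real (Suc j) / 2^L) \<in> borel_measurable M" by (rule bridge_meas[OF B]) (use ju j in \<open>auto simp: less_imp_le\<close>)
  have m2[measurable]: "B (real j / 2^L) \<in> borel_measurable M" by (rule bridge_meas[OF B]) (use ju j in \<open>auto simp: less_imp_le\<close>)
  show ?thesis unfolding bad_ev_def by measurable
qed

lemma level_bound:
  assumes P: "prob_space M" and B: "std_brownian_bridge M B"
  shows "measure M (\<Union>j\<in>{..<2^L}. bad_ev M B L j) \<le> 3 * (1 / (2 * (9/10)^4))^L"
proof -
  interpret prob_space M by (rule P)
  have "measure M (\<Union>j\<in>{..<2^L}. bad_ev M B L j) \<le> (\<Sum>j\<in>{..<2^L}. measure M (bad_ev M B L j))"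
    by (rule finite_measure_subadditive_finite) (auto intro: bad_ev_sets[OF B])
  also have "\<dots> \<le> (\<Sum>j\<in>{..<(2::nat)^L}. 3 * (1/2^L)^2 / ((9/10)^L)^4)"
    by (rule sum_mono) (use bad_ev_bound[OF P B] in auto)
  also have "\<dots> = 2^L * (3 * (1/2^L)^2 / ((9/10)^L)^4)" by simp
  also have "\<dots> = 3 * (1 / (2 * (9/10)^4))^L"
  proof -
    have e1: "((9/10::real)^L)^4 = ((9/10)^4)^L" by (simp add: power_mult[symmetric] mult.commute)
    have e2: "(2::real)^L * ((9/10)^4)^L = (2 * (9/10)^4)^L" by (simp add: power_mult_distrib)
    have "(2::real)^L * (3 * (1/2^L)^2 / ((9/10)^L)^4) = 3 / ((2::real)^L * ((9/10)^4)^L)"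
      unfolding e1 by (simp add: power2_eq_square field_simps)
    also have "\<dots> = 3 * (1 / (2 * (9/10)^4))^L" unfolding e2 by (simp add: power_one_over)
    finally show ?thesis .
  qed
  finally show ?thesis .
qed

lemma bad_measure:
  assumes P: "prob_space M" and B: "std_brownian_bridge M B"
  shows "measure M (badset M B K) \<le> 3 * (1 / (2 * (9/10)^4))^K / (1 - 1 / (2 * (9/10)^4))"
proof -
  interpret prob_space M by (rule P)
  define r :: real where "r = 1 / (2 * (9/10)^4)"
  have p4: "(9/10::real)^4 = 6561/10000" by (simp add: eval_nat_numeral)
  have r: "0 \<le> r" "r < 1" unfolding r_def p4 by auto
  define A where "A k = (\<Union>j\<in>{..<2^(k+K)}. bad_ev M B (k + K) j)" for k
  have As: "range A \<subseteq> sets M" unfolding A_def by (auto intro!: sets.finite_UN bad_ev_sets[OF B])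
  have Ab: "measure M (A k) \<le> 3 * r^K * r^k" for k
    using level_bound[OF P B, of "k + K"] unfolding A_def r_def by (simp add: power_add mult.commute mult.left_commute)
  have sg: "summable (\<lambda>k. 3 * r^K * r^k)" using r by (intro summable_mult summable_geometric) auto
  have sA: "summable (\<lambda>k. measure M (A k))"
    by (rule summable_comparison_test[OF _ sg]) (use Ab in auto)
  have "measure M (badset M B K) = measure M (\<Union>(range A))" unfolding badset_def A_def by simp
  also have "\<dots> \<le> (\<Sum>k. measure M (A k))" by (rule finite_measure_subadditive_countably[OF As sA])
  also have "\<dots> \<le> (\<Sum>k. 3 * r^K * r^k)" by (rule suminf_le[OF Ab sA sg])
  also have "\<dots> = 3 * r^K * (1 / (1 - r))" using r by (simp add: suminf_mult suminf_geometric)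
  finally show ?thesis unfolding r_def by simp
qed

lemma bad_modc:
  fixes B :: "real \<Rightarrow> 'a \<Rightarrow> real"
  assumes w: "\<omega> \<in> space M" "\<omega> \<notin> badset M B K" and c: "continuous_on {0..1} (\<lambda>t. B t \<omega>)"
  shows "modc (\<lambda>t. B t \<omega>) 0 1 (1 / 2^K) (19 * (9/10)^K)"
proof (rule chain_det[OF c], intro allI impI)
  fix k j :: nat assume k: "K \<le> k" and j: "j < 2^k"
  have kk: "(k - K) + K = k" using k by simp
  have "\<omega> \<notin> bad_ev M B ((k - K) + K) j"
  proof
    assume "\<omega> \<in> bad_ev M B ((k - K) + K) j"
    moreover have "j \<in> {..<2^((k - K) + K)}" using j kk by simp
    ultimately have "\<omega> \<in> badset M B K" unfolding badset_def by blast
    then show False using w by simp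
  qed
  then show "\<bar>B (real (Suc j) / 2 ^ k) \<omega> - B (real j / 2 ^ k) \<omega>\<bar> \<le> (9 / 10) ^ k"
    using w kk unfolding bad_ev_def by auto
qed

definition Nn :: "nat \<Rightarrow> nat" where "Nn n = (if n = 0 then 1 else n)"

definition Bcon :: "(nat \<Rightarrow> 'd \<Rightarrow> real \<Rightarrow> 'a \<Rightarrow> real) \<Rightarrow> nat \<Rightarrow> 'd \<Rightarrow> real \<Rightarrow> 'a \<Rightarrow> real" where
  "Bcon W n j t \<omega> = (1 - t) * (W n j (real (Nn n)) \<omega> / sqrt (real (Nn n)))
       - W n j (real (Nn n) * (1 - t)) \<omega> / sqrt (real (Nn n))"

lemma Nn_pos: "real (Nn n) > 0" unfolding Nn_def by auto

lemma var_identity: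
  fixes cs ts :: "nat \<Rightarrow> real" and N :: real
  assumes N: "N > 0" and ts: "\<forall>i<m. ts i \<in> {0..1}"
  defines "A \<equiv> (\<Sum>i<m. cs i * (1 - ts i))"
  defines "ts' \<equiv> (\<lambda>i. if i < m then N * (1 - ts i) else N)"
  defines "cs' \<equiv> (\<lambda>i. if i < m then - cs i / sqrt N else A / sqrt N)"
  shows "(\<Sum>i<Suc m. \<Sum>j<Suc m. cs' i * cs' j * min (ts' i) (ts' j))
       = (\<Sum>i<m. \<Sum>j<m. cs i * cs j * (min (ts i) (ts j) - ts i * ts j))"
proof -
  have sN: "sqrt N * sqrt N = N" using N by simp
  have sNp: "sqrt N > 0" using N by simp
  have F1: "cs' i * cs' j * min (ts' i) (ts' j) = cs i * cs j * (1 - max (ts i) (ts j))" if "i < m" "j < m" for i j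
  proof -
    have mn: "min (N * (1 - ts i)) (N * (1 - ts j)) = N * (1 - max (ts i) (ts j))"
      using N by (auto simp: min_def max_def mult_le_cancel_left_pos)
    have "cs' i * cs' j * min (ts' i) (ts' j) = (cs i * cs j / (sqrt N * sqrt N)) * min (N * (1 - ts i)) (N * (1 - ts j))"
      using that unfolding cs'_def ts'_def by simp
    also have "\<dots> = cs i * cs j / N * (N * (1 - max (ts i) (ts j)))" unfolding sN mn ..
    also have "\<dots> = cs i * cs j * (1 - max (ts i) (ts j))" using N by simp
    finally show ?thesis .
  qed
  have F2: "cs' i * cs' m * min (ts' i) (ts' m) = - cs i * (1 - ts i) * A" if "i < m" for i
  proof -
    have "min (N * (1 - ts i)) N = N * (1 - ts i)" using N ts that by (auto simp: min_def mult_le_cancel_left_pos)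
    then show ?thesis using that sN sNp unfolding cs'_def ts'_def by (simp add: field_simps)
  qed
  have F3: "cs' m * cs' j * min (ts' m) (ts' j) = - cs j * (1 - ts j) * A" if "j < m" for j
  proof -
    have "min N (N * (1 - ts j)) = N * (1 - ts j)" using N ts that by (auto simp: min_def mult_le_cancel_left_pos)
    then show ?thesis using that sN sNp unfolding cs'_def ts'_def by (simp add: field_simps)
  qed
  have F4: "cs' m * cs' m * min (ts' m) (ts' m) = A * A"
    using sN sNp unfolding cs'_def ts'_def by (simp add: field_simps)
  have eq0: "(\<Sum>i<Suc m. \<Sum>j<Suc m. cs' i * cs' j * min (ts' i) (ts' j))
      = (\<Sum>i<m. \<Sum>j<m. cs' i * cs' j * min (ts' i) (ts' j)) + (\<Sum>i<m. cs' i * cs' m * min (ts' i) (ts' m))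
        + (\<Sum>j<m. cs' m * cs' j * min (ts' m) (ts' j)) + cs' m * cs' m * min (ts' m) (ts' m)"
    by (simp add: sum.distrib)
  have S1: "(\<Sum>i<m. \<Sum>j<m. cs' i * cs' j * min (ts' i) (ts' j)) = (\<Sum>i<m. \<Sum>j<m. cs i * cs j * (1 - max (ts i) (ts j)))"
    using F1 by simp
  have S2: "(\<Sum>i<m. cs' i * cs' m * min (ts' i) (ts' m)) = - A * A"
    using F2 unfolding A_def by (simp add: sum_distrib_right sum_negf)
  have S3: "(\<Sum>j<m. cs' m * cs' j * min (ts' m) (ts' j)) = - A * A"
    using F3 unfolding A_def by (simp add: sum_distrib_right sum_negf)
  have AA: "A * A = (\<Sum>i<m. \<Sum>j<m. cs i * cs j * ((1 - ts i) * (1 - ts j)))"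
    unfolding A_def by (simp add: sum_product algebra_simps)
  have R: "(\<Sum>i<m. \<Sum>j<m. cs i * cs j * (1 - max (ts i) (ts j))) - (\<Sum>i<m. \<Sum>j<m. cs i * cs j * ((1 - ts i) * (1 - ts j)))
        = (\<Sum>i<m. \<Sum>j<m. cs i * cs j * (min (ts i) (ts j) - ts i * ts j))"
  proof -
    have "cs i * cs j * (1 - max (ts i) (ts j)) - cs i * cs j * ((1 - ts i) * (1 - ts j))
        = cs i * cs j * (min (ts i) (ts j) - ts i * ts j)" for i j
      by (simp add: min_def max_def algebra_simps)
    then show ?thesis by (simp add: sum_subtractf[symmetric])
  qed
  show ?thesis using eq0 S1 S2 S3 F4 AA R by linarith
qed


lemma Bcon_bridge:
  assumes Wp: "std_wiener_process M (W n j)"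
  shows "std_brownian_bridge M (Bcon W n j)"
proof -
  define N where "N = real (Nn n)"
  have Np: "N > 0" unfolding N_def by (rule Nn_pos)
  have G: "centered_gaussian_process M {0..} (W n j) (\<lambda>s t. min s t)"
    and AEc: "AE \<omega> in M. continuous_on {0..} (\<lambda>t. W n j t \<omega>)"
    using Wp unfolding std_wiener_process_def by auto
  have Wm: "W n j s \<in> borel_measurable M" if "s \<ge> 0" for s
    using G that unfolding centered_gaussian_process_def by auto
  have Bdef: "Bcon W n j t \<omega> = (1 - t) * (W n j N \<omega> / sqrt N) - W n j (N * (1 - t)) \<omega> / sqrt N" for t \<omega>
    unfolding Bcon_def N_def ..
  have meas: "\<forall>t\<in>{0..1}. Bcon W n j t \<in> borel_measurable M"
  proof
    fix t :: real assume t: "t \<in> {0..1}"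
    have [measurable]: "W n j N \<in> borel_measurable M" using Wm Np by simp
    have [measurable]: "W n j (N * (1 - t)) \<in> borel_measurable M" using Wm Np t by simp
    show "Bcon W n j t \<in> borel_measurable M" unfolding Bdef[abs_def] by measurable
  qed
  have gauss: "normal_rv M (\<lambda>\<omega>. \<Sum>i<m. cs i * Bcon W n j (ts i) \<omega>) 0
          (\<Sum>i<m. \<Sum>l<m. cs i * cs l * (min (ts i) (ts l) - ts i * ts l))"
    if ts: "\<forall>i<m. ts i \<in> {0..1}" for m :: nat and ts cs :: "nat \<Rightarrow> real"
  proof -
    define A where "A = (\<Sum>i<m. cs i * (1 - ts i))"
    define ts' where "ts' = (\<lambda>i. if i < m then N * (1 - ts i) else N)"
    define cs' where "cs' = (\<lambda>i. if i < m then - cs i / sqrt N else A / sqrt N)"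
    have ts'r: "\<forall>i<Suc m. ts' i \<in> {0..}" using ts Np unfolding ts'_def by auto
    have nr: "normal_rv M (\<lambda>\<omega>. \<Sum>i<Suc m. cs' i * W n j (ts' i) \<omega>) 0
        (\<Sum>i<Suc m. \<Sum>l<Suc m. cs' i * cs' l * min (ts' i) (ts' l))"
      using G ts'r unfolding centered_gaussian_process_def by blast
    have feq: "(\<lambda>\<omega>. \<Sum>i<Suc m. cs' i * W n j (ts' i) \<omega>) = (\<lambda>\<omega>. \<Sum>i<m. cs i * Bcon W n j (ts i) \<omega>)"
    proof
      fix \<omega>
      have "(\<Sum>i<m. cs i * Bcon W n j (ts i) \<omega>)
          = (\<Sum>i<m. cs i * (1 - ts i) * (W n j N \<omega> / sqrt N)) - (\<Sum>i<m. cs i * W n j (N * (1 - ts i)) \<omega> / sqrt N)"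
        unfolding Bdef sum_subtractf[symmetric] by (rule sum.cong) (simp_all add: algebra_simps)
      also have "(\<Sum>i<m. cs i * (1 - ts i) * (W n j N \<omega> / sqrt N)) = cs' m * W n j (ts' m) \<omega>"
        unfolding cs'_def ts'_def A_def by (simp add: sum_distrib_right sum_divide_distrib)
      also have "(\<Sum>i<m. cs i * W n j (N * (1 - ts i)) \<omega> / sqrt N) = - (\<Sum>i<m. cs' i * W n j (ts' i) \<omega>)"
        unfolding cs'_def ts'_def by (simp add: sum_negf[symmetric])
      finally show "(\<Sum>i<Suc m. cs' i * W n j (ts' i) \<omega>) = (\<Sum>i<m. cs i * Bcon W n j (ts i) \<omega>)" by simp
    qed
    have veq: "(\<Sum>i<Suc m. \<Sum>l<Suc m. cs' i * cs' l * min (ts' i) (ts' l))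
       = (\<Sum>i<m. \<Sum>l<m. cs i * cs l * (min (ts i) (ts l) - ts i * ts l))"
      unfolding ts'_def cs'_def A_def by (rule var_identity[OF Np ts])
    show ?thesis using nr unfolding feq veq .
  qed
  have cont: "AE \<omega> in M. continuous_on {0..1} (\<lambda>t. Bcon W n j t \<omega>)"
    using AEc
  proof eventually_elim
    case (elim \<omega>)
    have c2: "continuous_on {0..1} (\<lambda>t. W n j (N * (1 - t)) \<omega>)"
      by (rule continuous_on_compose2[OF elim]) (use Np in \<open>auto intro!: continuous_intros\<close>)
    show ?case unfolding Bdef by (intro continuous_intros c2) (use Np in auto)
  qed
  show ?thesis unfolding std_brownian_bridge_def centered_gaussian_process_def
    using meas gauss cont by blast
qed


lemma Bcon_indep:
  assumes P: "prob_space M" and Wi: "indep_processes M {0..} UNIV (W n)"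
  shows "indep_processes M {0..1} UNIV (Bcon W n)"
proof -
  define N where "N = real (Nn n)"
  have Np: "N > 0" unfolding N_def by (rule Nn_pos)
  define Y where "Y g = (\<lambda>t\<in>{0..1}. (1 - t) * (g N / sqrt N) - g (N * (1 - t)) / sqrt N)" for g :: "real \<Rightarrow> real"
  have Ym: "Y \<in> measurable (Pi\<^sub>M {0..} (\<lambda>_. borel)) (Pi\<^sub>M {0..1} (\<lambda>_. borel))"
    unfolding Y_def
  proof (rule measurable_restrict)
    fix t :: real assume t: "t \<in> {0..1}"
    have [measurable]: "(\<lambda>g. g N) \<in> borel_measurable (Pi\<^sub>M {0..} (\<lambda>_. borel))"
      by (rule measurable_component_singleton) (use Np in auto)
    have [measurable]: "(\<lambda>g. g (N * (1 - t))) \<in> borel_measurable (Pi\<^sub>M {0..} (\<lambda>_. borel))"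
      by (rule measurable_component_singleton) (use Np t in auto)
    show "(\<lambda>g::real\<Rightarrow>real. (1 - t) * (g N / sqrt N) - g (N * (1 - t)) / sqrt N) \<in> borel_measurable (Pi\<^sub>M {0..} (\<lambda>_. borel))"
      by measurable
  qed
  have I: "prob_space.indep_vars M (\<lambda>_. Pi\<^sub>M {0..} (\<lambda>_. borel)) (\<lambda>j \<omega>. restrict (\<lambda>t. W n j t \<omega>) {0..}) UNIV"
    using Wi unfolding indep_processes_def .
  have I2: "prob_space.indep_vars M (\<lambda>_. Pi\<^sub>M {0..1} (\<lambda>_. borel)) (\<lambda>j \<omega>. Y (restrict (\<lambda>t. W n j t \<omega>) {0..})) UNIV"
    by (rule prob_space.indep_vars_compose2[OF P I]) (use Ym in auto)
  have eq: "(\<lambda>j \<omega>. Y (restrict (\<lambda>t. W n j t \<omega>) {0..})) = (\<lambda>j \<omega>. restrict (\<lambda>t. Bcon W n j t \<omega>) {0..1})"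
  proof (intro ext)
    fix j \<omega> t
    show "Y (restrict (\<lambda>t. W n j t \<omega>) {0..}) t = restrict (\<lambda>t. Bcon W n j t \<omega>) {0..1} t"
      using Np unfolding Y_def Bcon_def N_def[symmetric] by (auto simp: restrict_def)
  qed
  show ?thesis unfolding indep_processes_def using I2 unfolding eq .
qed

lemma outer_prob_le:
  assumes "S \<subseteq> A" "A \<in> sets M"
  shows "outer_prob M S \<le> measure M A"
  unfolding outer_prob_def
  by (rule cINF_lower) (use assms in \<open>auto intro!: bdd_belowI[of _ 0]\<close>)

lemma outer_prob_nonneg:
  assumes "S \<subseteq> space M"
  shows "0 \<le> outer_prob M S"
  unfolding outer_prob_def
  by (rule cINF_greatest) (use assms sets.top in auto)

lemma ae_to_meas:
  fixes X :: "nat \<Rightarrow> 'a \<Rightarrow> real" and c :: real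
  assumes P: "prob_space M" and Xm: "\<And>n. X n \<in> borel_measurable M"
    and ae: "AE \<omega> in M. (\<lambda>n. X n \<omega>) \<longlonglongrightarrow> 0" and c: "c > 0"
  shows "(\<lambda>n. measure M {\<omega>\<in>space M. c \<le> \<bar>X n \<omega>\<bar>}) \<longlonglongrightarrow> 0"
proof -
  interpret prob_space M by (rule P)
  define F where "F N = {\<omega>\<in>space M. \<exists>n\<ge>N. c \<le> \<bar>X n \<omega>\<bar>}" for N
  have Fs: "F N \<in> sets M" for N
  proof -
    have FN: "F N = (\<Union>n\<in>{N..}. {\<omega>\<in>space M. c \<le> \<bar>X n \<omega>\<bar>})" unfolding F_def by auto
    have "{\<omega>\<in>space M. c \<le> \<bar>X n \<omega>\<bar>} \<in> sets M" for n
      using borel_measurable_le[OF borel_measurable_const[of c] borel_measurable_abs[OF Xm[of n]]] by simp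
    then have "(\<Union>n\<in>{N..}. {\<omega>\<in>space M. c \<le> \<bar>X n \<omega>\<bar>}) \<in> sets M" by (intro sets.countable_UN') auto
    then show ?thesis unfolding FN .
  qed
  have dec: "decseq F" unfolding decseq_def F_def by (auto intro: order.trans)
  have "(\<lambda>N. measure M (F N)) \<longlonglongrightarrow> measure M (\<Inter>N. F N)"
    by (rule finite_Lim_measure_decseq) (use Fs dec in auto)
  moreover have "measure M (\<Inter>N. F N) = 0"
  proof -
    have ae2: "AE \<omega> in M. \<omega> \<notin> (\<Inter>N. F N)"
      using ae
    proof eventually_elim
      case (elim \<omega>)
      then obtain N where "\<forall>n\<ge>N. \<bar>X n \<omega> - 0\<bar> < c" using c unfolding LIMSEQ_def dist_real_def by blast
      then have "\<omega> \<notin> F N" unfolding F_def by force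
      then show ?case by blast
    qed
    have Is: "(\<Inter>N. F N) \<in> sets M" using Fs by auto
    have sub: "{\<omega>\<in>space M. \<not> \<omega> \<notin> (\<Inter>N. F N)} = (\<Inter>N. F N)" unfolding F_def by auto
    have "emeasure M (\<Inter>N. F N) = 0" using AE_iff_measurable[OF Is sub] ae2 by simp
    then show ?thesis by (simp add: emeasure_eq_measure)
  qed
  ultimately have F0: "(\<lambda>N. measure M (F N)) \<longlonglongrightarrow> 0" by simp
  show ?thesis
  proof (rule Lim_null_comparison[OF _ F0])
    show "\<forall>\<^sub>F n in sequentially. norm (measure M {\<omega>\<in>space M. c \<le> \<bar>X n \<omega>\<bar>}) \<le> measure M (F n)"
    proof (intro always_eventually allI)
      fix n
      have "measure M {\<omega>\<in>space M. c \<le> \<bar>X n \<omega>\<bar>} \<le> measure M (F n)"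
      proof (rule finite_measure_mono[OF _ Fs])
        show "{\<omega>\<in>space M. c \<le> \<bar>X n \<omega>\<bar>} \<subseteq> F n" unfolding F_def by blast
      qed
      then show "norm (measure M {\<omega>\<in>space M. c \<le> \<bar>X n \<omega>\<bar>}) \<le> measure M (F n)" by simp
    qed
  qed
qed

lemma vec_comp_meas:
  fixes f :: "'a \<Rightarrow> real ^ 'd"
  assumes "f \<in> borel_measurable M"
  shows "(\<lambda>\<omega>. f \<omega> $ p) \<in> borel_measurable M"
proof -
  have "(\<lambda>v::real^'d. v $ p) \<in> borel_measurable borel"
    by (rule borel_measurable_continuous_onI) (intro linear_continuous_on bounded_linear_vec_nth)
  from measurable_compose[OF assms this] show ?thesis .
qed

lemma Bcon_cont:
  assumes "continuous_on {0..} (\<lambda>t. W n j t \<omega>)"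
  shows "continuous_on {0..1} (\<lambda>t. Bcon W n j t \<omega>)"
proof -
  define N where "N = real (Nn n)"
  have Np: "N > 0" unfolding N_def by (rule Nn_pos)
  have c2: "continuous_on {0..1} (\<lambda>t. W n j (N * (1 - t)) \<omega>)"
    by (rule continuous_on_compose2[OF assms]) (use Np in \<open>auto intro!: continuous_intros\<close>)
  show ?thesis unfolding Bcon_def N_def[symmetric] by (intro continuous_intros c2) (use Np in auto)
qed

lemma modc_mono: "modc f a b \<delta> \<epsilon> \<Longrightarrow> \<delta>' \<le> \<delta> \<Longrightarrow> modc f a b \<delta>' \<epsilon>"
  unfolding modc_def by force

lemma badset_sets:
  assumes B: "std_brownian_bridge M B"
  shows "badset M B K \<in> sets M"
  unfolding badset_def by (intro sets.countable_UN sets.finite_UN) (auto intro: bad_ev_sets[OF B])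

lemma wiener_zero:
  assumes "std_wiener_process M w"
  shows "AE \<omega> in M. w 0 \<omega> = 0"
proof -
  have G: "centered_gaussian_process M {0..} w (\<lambda>s t. min s t)" using assms unfolding std_wiener_process_def by blast
  have H: "\<forall>(m::nat) ts cs. (\<forall>i<m. ts i \<in> {0..}) \<longrightarrow> normal_rv M (\<lambda>\<omega>. \<Sum>i<m. cs i * w (ts i) \<omega>) 0
      (\<Sum>i<m. \<Sum>j<m. cs i * cs j * min (ts i) (ts j))"
    using G unfolding centered_gaussian_process_def by blast
  have "normal_rv M (\<lambda>\<omega>. w 0 \<omega>) 0 0"
    using H[rule_format, of "Suc 0" "\<lambda>_. 0" "\<lambda>_. 1"] by simp
  then show ?thesis unfolding normal_rv_def by simp
qed

lemma one_minus_one_minus: "1 - (1 - (x::real)) = x" by simp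

lemma alg2: "(x::real) * (a / c) - b / c = - (b - x * a) / c"
  by (cases "c = 0") (simp_all add: field_simps)

theorem lemmaB1:
  fixes M :: "'a measure"
    and lam :: "real ^ 'd"
    and \<eta> :: "nat \<Rightarrow> 'a \<Rightarrow> real ^ 'd"
    and h :: "real \<Rightarrow> real"
    and W :: "nat \<Rightarrow> 'd \<Rightarrow> real \<Rightarrow> 'a \<Rightarrow> real"
  assumes M: "prob_space M"
    and lam_nonneg: "\<forall>j. lam $ j \<ge> 0"
    and eta_rv: "\<forall>i\<ge>1. \<eta> i \<in> borel_measurable M"
    and W_wiener: "\<forall>n j. std_wiener_process M (W n j)"
    and W_indep: "\<forall>n. indep_processes M {0..} UNIV (W n)"
    and approx: "AE \<omega> in M. (\<lambda>n. (1 / sqrt (real n)) *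
        Max {norm ((\<Sum>i=1..k. \<eta> i \<omega>) - (\<chi> j. sqrt (lam $ j) * W n j (real k) \<omega>)) | k. k \<in> {1..n}})
        \<longlonglongrightarrow> 0"
    and h_nonconst: "\<exists>x\<in>{-1..1}. \<exists>y\<in>{-1..1}. h x \<noteq> h y"
    and h_zero: "\<forall>x\<in>{-1..0}. h x = 0"
    and h_bv: "bounded_variation_on h (-1) 1"
    and h_holder: "\<exists>\<alpha>>0. holder_on \<alpha> {0..1} h"
  shows "\<exists>B :: nat \<Rightarrow> 'd \<Rightarrow> real \<Rightarrow> 'a \<Rightarrow> real.
     (\<forall>n j. std_brownian_bridge M (B n j)) \<and>
     (\<forall>n. indep_processes M {0..1} UNIV (B n)) \<and>
     (\<forall>\<epsilon>>0. (\<lambda>n. outer_prob M {\<omega>\<in>space M.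
        (SUP t\<in>{0<..<1}. ereal (norm (
           (1 / sqrt (real n)) *\<^sub>R
             (\<Sum>i=1..n. h ((real_of_int (int i - \<lfloor>real n * t\<rfloor>)) / real n) *\<^sub>R
                 (\<eta> i \<omega> - (1 / real n) *\<^sub>R (\<Sum>l=1..n. \<eta> l \<omega>)))
           - (\<chi> p. sqrt (lam $ p) *
                rs_integral (\<lambda>y. B n p (1 - t - y) \<omega>) h 0 (1 - t)))))
        > ereal \<epsilon>}) \<longlonglongrightarrow> 0)"
proof -
  interpret P: prob_space M by (rule M)
  obtain V where V0: "V \<ge> 0" and VBh: "VB h V" using VB_from_bv[OF h_bv] by blast
  define B where "B = Bcon W"
  have Bb: "\<forall>n j. std_brownian_bridge M (B n j)" unfolding B_def using W_wiener by (auto intro: Bcon_bridge)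
  have Bi: "\<forall>n. indep_processes M {0..1} UNIV (B n)" unfolding B_def using W_indep by (auto intro: Bcon_indep[OF M])
  define cd where "cd = real CARD('d)"
  define SL where "SL = (\<Sum>p\<in>UNIV. sqrt (lam $ p))"
  define r :: real where "r = 1 / (2 * (9/10)^4)"
  define Dp where "Dp n \<omega> = Max ((\<lambda>k. \<Sum>p\<in>UNIV. \<bar>(\<Sum>i=1..k. \<eta> i \<omega> $ p) - sqrt (lam $ p) * W n p (real k) \<omega>\<bar>) ` {1..n})" for n \<omega>
  define X where "X n \<omega> = 2 * V * cd * Dp n \<omega> / sqrt (real n)" for n \<omega>
  define Mx where "Mx n \<omega> = Max {norm ((\<Sum>i=1..k. \<eta> i \<omega>) - (\<chi> j. sqrt (lam $ j) * W n j (real k) \<omega>)) | k. k \<in> {1..n}}" for n \<omega>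
  define vecf where "vecf n t \<omega> = (1 / sqrt (real n)) *\<^sub>R
             (\<Sum>i=1..n. h ((real_of_int (int i - \<lfloor>real n * t\<rfloor>)) / real n) *\<^sub>R
                 (\<eta> i \<omega> - (1 / real n) *\<^sub>R (\<Sum>l=1..n. \<eta> l \<omega>)))
           - (\<chi> p. sqrt (lam $ p) * rs_integral (\<lambda>y. B n p (1 - t - y) \<omega>) h 0 (1 - t))" for n t \<omega>
  have cd0: "cd \<ge> 0" unfolding cd_def by simp
  have SL0: "SL \<ge> 0" unfolding SL_def using lam_nonneg by (intro sum_nonneg) auto
  have r01: "0 \<le> r" "r < 1" unfolding r_def by (auto simp: eval_nat_numeral)
  have AEg: "AE \<omega> in M. \<forall>n. \<forall>p\<in>UNIV. continuous_on {0..} (\<lambda>t. W n p t \<omega>) \<and> W n p 0 \<omega> = 0"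
  proof (subst AE_all_countable, intro allI AE_finite_allI)
    fix n p
    show "AE \<omega> in M. continuous_on {0..} (\<lambda>t. W n p t \<omega>) \<and> W n p 0 \<omega> = 0"
      using W_wiener wiener_zero[of M "W n p"] unfolding std_wiener_process_def
      by (intro eventually_conj) auto
  qed simp
  obtain N0 where N0: "{\<omega>\<in>space M. \<not> (\<forall>n. \<forall>p\<in>UNIV. continuous_on {0..} (\<lambda>t. W n p t \<omega>) \<and> W n p 0 \<omega> = 0)} \<subseteq> N0"
      "emeasure M N0 = 0" "N0 \<in> sets M"
    using AEg by (rule AE_E)
  have mN0: "measure M N0 = 0" using N0(2) by (simp add: P.emeasure_eq_measure)
  have Wm: "W n p s \<in> borel_measurable M" if "s \<ge> 0" for n p s
    using W_wiener that unfolding std_wiener_process_def centered_gaussian_process_def by auto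
  have Xm: "X n \<in> borel_measurable M" for n
  proof -
    have sm: "(\<lambda>\<omega>. \<Sum>i=1..k. \<eta> i \<omega> $ p) \<in> borel_measurable M" for k p
      by (rule borel_measurable_sum) (use eta_rv vec_comp_meas in auto)
    have tm: "(\<lambda>\<omega>. \<Sum>p\<in>UNIV. \<bar>(\<Sum>i=1..k. \<eta> i \<omega> $ p) - sqrt (lam $ p) * W n p (real k) \<omega>\<bar>) \<in> borel_measurable M" for k
      by (intro borel_measurable_sum borel_measurable_abs borel_measurable_diff borel_measurable_times
          borel_measurable_const sm Wm) auto
    have "Dp n \<in> borel_measurable M" unfolding Dp_def[abs_def]
      by (rule borel_measurable_Max) (use tm in auto)
    then show ?thesis unfolding X_def[abs_def] by measurable
  qed
  have Dp_ge: "\<bar>(\<Sum>i=1..k. \<eta> i \<omega> $ p) - sqrt (lam $ p) * W n p (real k) \<omega>\<bar> \<le> Dp n \<omega>" if "k \<in> {1..n}" for n k \<omega> p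
  proof -
    have "\<bar>(\<Sum>i=1..k. \<eta> i \<omega> $ p) - sqrt (lam $ p) * W n p (real k) \<omega>\<bar>
        \<le> (\<Sum>p\<in>UNIV. \<bar>(\<Sum>i=1..k. \<eta> i \<omega> $ p) - sqrt (lam $ p) * W n p (real k) \<omega>\<bar>)"
      by (rule member_le_sum) auto
    also have "\<dots> \<le> Dp n \<omega>" unfolding Dp_def by (rule Max_ge) (use that in auto)
    finally show ?thesis .
  qed
  have Dp_nonneg: "0 \<le> Dp n \<omega>" if "n \<ge> 1" for n \<omega>
    using Dp_ge[of 1 n \<omega>] that by (meson abs_ge_zero atLeastAtMost_iff order.trans order_refl)
  have Dp_Mx: "Dp n \<omega> \<le> cd * Mx n \<omega>" if n: "n \<ge> 1" for n \<omega>
  proof -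
    define v where "v k = (\<Sum>i=1..k. \<eta> i \<omega>) - (\<chi> j. sqrt (lam $ j) * W n j (real k) \<omega>)" for k
    have fin: "finite {norm (v k) | k. k \<in> {1..n}}" by (simp add: Setcompr_eq_image)
    have "(\<Sum>p\<in>UNIV. \<bar>(\<Sum>i=1..k. \<eta> i \<omega> $ p) - sqrt (lam $ p) * W n p (real k) \<omega>\<bar>) \<le> cd * Mx n \<omega>"
      if k: "k \<in> {1..n}" for k
    proof -
      have "(\<Sum>p\<in>UNIV. \<bar>(\<Sum>i=1..k. \<eta> i \<omega> $ p) - sqrt (lam $ p) * W n p (real k) \<omega>\<bar>) = (\<Sum>p\<in>UNIV. \<bar>v k $ p\<bar>)"
        unfolding v_def by simp
      also have "\<dots> \<le> (\<Sum>p\<in>(UNIV::'d set). norm (v k))" by (intro sum_mono component_le_norm_cart)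
      also have "\<dots> = cd * norm (v k)" unfolding cd_def by simp
      also have "norm (v k) \<le> Mx n \<omega>" unfolding Mx_def v_def[symmetric] by (rule Max_ge[OF fin]) (use k in blast)
      then have "cd * norm (v k) \<le> cd * Mx n \<omega>" using cd0 by (rule mult_left_mono)
      finally show ?thesis .
    qed
    then show ?thesis unfolding Dp_def using n by (subst Max_le_iff) auto
  qed
  have AEX: "AE \<omega> in M. (\<lambda>n. X n \<omega>) \<longlonglongrightarrow> 0"
    using approx
  proof eventually_elim
    case (elim \<omega>)
    have l0: "(\<lambda>n. (1 / sqrt (real n)) * Mx n \<omega>) \<longlonglongrightarrow> 0" using elim unfolding Mx_def .
    have lim: "(\<lambda>n. (2 * V * cd * cd) * ((1 / sqrt (real n)) * Mx n \<omega>)) \<longlonglongrightarrow> 0"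
      using tendsto_mult_left[OF l0, of "2 * V * cd * cd"] by simp
    show ?case
    proof (rule Lim_null_comparison[OF _ lim])
      show "\<forall>\<^sub>F n in sequentially. norm (X n \<omega>) \<le> 2 * V * cd * cd * (1 / sqrt (real n) * Mx n \<omega>)"
      proof (rule eventually_sequentiallyI[of 1])
        fix n :: nat assume n: "1 \<le> n"
        have "0 \<le> X n \<omega>" unfolding X_def using V0 cd0 Dp_nonneg[OF n] by simp
        moreover have "X n \<omega> \<le> 2 * V * cd * cd * (1 / sqrt (real n) * Mx n \<omega>)"
        proof -
          have "2 * V * cd * Dp n \<omega> \<le> 2 * V * cd * (cd * Mx n \<omega>)"
            using Dp_Mx[OF n] V0 cd0 by (intro mult_left_mono) auto
          then show ?thesis unfolding X_def by (simp add: divide_right_mono mult.assoc)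
        qed
        ultimately show "norm (X n \<omega>) \<le> 2 * V * cd * cd * (1 / sqrt (real n) * Mx n \<omega>)" by simp
      qed
    qed
  qed
  have PW: "norm (vecf n t \<omega>) \<le> X n \<omega> + 95 * V * (9/10)^K * SL"
    if n: "n \<ge> 1" and nK: "2^Suc K \<le> n" and w: "\<omega> \<in> space M" "\<omega> \<notin> N0"
       and nb: "\<omega> \<notin> (\<Union>p. badset M (B n p) K)" and t: "t \<in> {0<..<1}" for n K \<omega> t
  proof -
    have good: "\<forall>n. \<forall>p\<in>UNIV. continuous_on {0..} (\<lambda>t. W n p t \<omega>) \<and> W n p 0 \<omega> = 0"
      using w N0(1) by blast
    have np: "real n > 0" using n by simp
    have Nn: "Nn n = n" using n unfolding Nn_def by simp
    have comp: "\<bar>vecf n t \<omega> $ p\<bar> \<le> 2 * V * Dp n \<omega> / sqrt (real n) + 5 * sqrt (lam $ p) * (19 * (9/10)^K) * V" for p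
    proof -
      have Bc: "continuous_on {0..1} (\<lambda>s. B n p s \<omega>)" unfolding B_def by (rule Bcon_cont) (use good in blast)
      have B0: "B n p 0 \<omega> = 0" unfolding B_def Bcon_def by simp
      have mc1: "modc (\<lambda>s. B n p s \<omega>) 0 1 (1 / 2^K) (19 * (9/10)^K)"
      proof (rule bad_modc[where B="B n p"])
        show "\<omega> \<in> space M" by (rule w(1))
        show "\<omega> \<notin> badset M (B n p) K" using nb by blast
        show "continuous_on {0..1} (\<lambda>t. B n p t \<omega>)" by (rule Bc)
      qed
      have "(2::real) / real n \<le> 1 / 2^K"
      proof -
        have "real (2^Suc K) \<le> real n" using nK by (simp only: of_nat_le_iff)
        then have "2 * 2^K \<le> real n" by simp
        then show ?thesis using np by (simp add: field_simps)
      qed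
      then have mc: "modc (\<lambda>s. B n p s \<omega>) 0 1 (2 / real n) (19 * (9/10)^K)" by (rule modc_mono[OF mc1])
      have hB: "\<forall>i\<le>n. B n p (1 - real i / real n) \<omega> = - (W n p (real i) \<omega> - real i / real n * W n p (real n) \<omega>) / sqrt (real n)"
      proof (intro allI impI)
        fix i assume "i \<le> n"
        have a: "real n * (real i / real n) = real i" using np by simp
        show "B n p (1 - real i / real n) \<omega> = - (W n p (real i) \<omega> - real i / real n * W n p (real n) \<omega>) / sqrt (real n)"
          unfolding B_def Bcon_def Nn one_minus_one_minus a by (rule alg2)
      qed
      have w0: "W n p 0 \<omega> = 0" using good by blast
      have Dk: "\<forall>k\<in>{1..n}. \<bar>(\<Sum>i=1..k. \<eta> i \<omega> $ p) - sqrt (lam $ p) * W n p (real k) \<omega>\<bar> \<le> Dp n \<omega>"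
        using Dp_ge by blast
      have tt: "0 < t" "t < 1" using t by auto
      have eq: "vecf n t \<omega> $ p = (1 / sqrt (real n)) * (\<Sum>i=1..n. h (real_of_int (int i - \<lfloor>real n * t\<rfloor>) / real n) *
            (\<eta> i \<omega> $ p - (1 / real n) * (\<Sum>l=1..n. \<eta> l \<omega> $ p)))
          - sqrt (lam $ p) * rs_integral (\<lambda>y. B n p (1 - t - y) \<omega>) h 0 (1 - t)"
        unfolding vecf_def by simp
      show ?thesis unfolding eq
        using det_main[OF n tt lam_nonneg[rule_format, of p] VBh V0 h_zero Bc B0 mc hB w0 Dk]
        by (simp add: mult.assoc)
    qed
    have "norm (vecf n t \<omega>) \<le> (\<Sum>p\<in>UNIV. \<bar>vecf n t \<omega> $ p\<bar>)" by (rule norm_le_l1_cart)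
    also have "\<dots> \<le> (\<Sum>p\<in>UNIV. 2 * V * Dp n \<omega> / sqrt (real n) + 5 * sqrt (lam $ p) * (19 * (9/10)^K) * V)"
      by (rule sum_mono) (rule comp)
    also have "\<dots> = cd * (2 * V * Dp n \<omega> / sqrt (real n)) + 95 * V * (9/10)^K * SL"
      unfolding cd_def SL_def by (simp add: sum.distrib sum_distrib_left sum_distrib_right algebra_simps)
    also have "\<dots> = X n \<omega> + 95 * V * (9/10)^K * SL" unfolding X_def by simp
    finally show ?thesis .
  qed
  show ?thesis
  proof (intro exI[of _ B] conjI Bb Bi allI impI)
    fix \<epsilon> :: real assume \<epsilon>: "\<epsilon> > 0"
    have main: "(\<lambda>n. outer_prob M {\<omega>\<in>space M. (SUP t\<in>{0<..<1}. ereal (norm (vecf n t \<omega>))) > ereal \<epsilon>}) \<longlonglongrightarrow> 0"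
    proof (rule LIMSEQ_I)
      fix e :: real assume e: "e > 0"
      have l1: "(\<lambda>K. cd * (3 * r^K / (1 - r))) \<longlonglongrightarrow> cd * (3 * 0 / (1 - r))"
        using r01 by (intro tendsto_intros LIMSEQ_power_zero) auto
      have l2: "(\<lambda>K. 95 * V * (9/10::real)^K * SL) \<longlonglongrightarrow> 95 * V * 0 * SL"
        by (intro tendsto_intros LIMSEQ_power_zero) auto
      have "\<forall>\<^sub>F K in sequentially. cd * (3 * r^K / (1 - r)) < e/2 \<and> 95 * V * (9/10::real)^K * SL < \<epsilon>/2"
        using order_tendstoD(2)[OF l1, of "e/2"] order_tendstoD(2)[OF l2, of "\<epsilon>/2"] e \<epsilon>
        by (auto intro: eventually_conj)
      then obtain K where K1: "cd * (3 * r^K / (1 - r)) < e/2" and K2: "95 * V * (9/10::real)^K * SL < \<epsilon>/2"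
        unfolding eventually_sequentially by blast
      have e2: "\<epsilon>/2 > 0" using \<epsilon> by simp
      have lm: "(\<lambda>n. measure M {\<omega>\<in>space M. \<epsilon>/2 \<le> \<bar>X n \<omega>\<bar>}) \<longlonglongrightarrow> 0"
        by (rule ae_to_meas[OF M Xm AEX e2])
      have "\<forall>\<^sub>F n in sequentially. measure M {\<omega>\<in>space M. \<epsilon>/2 \<le> \<bar>X n \<omega>\<bar>} < e/2"
        using order_tendstoD(2)[OF lm, of "e/2"] e by simp
      then obtain N1 where N1: "\<forall>n\<ge>N1. measure M {\<omega>\<in>space M. \<epsilon>/2 \<le> \<bar>X n \<omega>\<bar>} < e/2"
        unfolding eventually_sequentially by blast
      show "\<exists>no. \<forall>n\<ge>no. norm (outer_prob M {\<omega>\<in>space M. (SUP t\<in>{0<..<1}. ereal (norm (vecf n t \<omega>))) > ereal \<epsilon>} - 0) < e"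
      proof (intro exI[of _ "max N1 (2^Suc K)"] allI impI)
        fix n assume nge: "max N1 (2^Suc K) \<le> n"
        have n1: "n \<ge> 1" using nge by (meson le_trans max.cobounded2 one_le_numeral one_le_power)
        have nK: "2^Suc K \<le> n" using nge by simp
        define S where "S = {\<omega>\<in>space M. (SUP t\<in>{0<..<1}. ereal (norm (vecf n t \<omega>))) > ereal \<epsilon>}"
        define A where "A = N0 \<union> (\<Union>p\<in>UNIV. badset M (B n p) K) \<union> {\<omega>\<in>space M. \<epsilon>/2 \<le> \<bar>X n \<omega>\<bar>}"
        have sub: "S \<subseteq> A"
        proof
          fix \<omega> assume wS: "\<omega> \<in> S"
          show "\<omega> \<in> A"
          proof (rule ccontr)
            assume nA: "\<omega> \<notin> A"
            have w: "\<omega> \<in> space M" "\<omega> \<notin> N0" "\<omega> \<notin> (\<Union>p. badset M (B n p) K)"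
              using wS nA unfolding S_def A_def by auto
            have "(SUP t\<in>{0<..<1}. ereal (norm (vecf n t \<omega>))) \<le> ereal (X n \<omega> + 95 * V * (9/10)^K * SL)"
              by (rule SUP_least) (use PW[OF n1 nK w] in auto)
            moreover have "ereal \<epsilon> < (SUP t\<in>{0<..<1}. ereal (norm (vecf n t \<omega>)))" using wS unfolding S_def by auto
            ultimately have "ereal \<epsilon> < ereal (X n \<omega> + 95 * V * (9/10)^K * SL)" by (meson less_le_trans)
            then have "\<epsilon> < X n \<omega> + 95 * V * (9/10)^K * SL" by simp
            then have "\<epsilon>/2 \<le> \<bar>X n \<omega>\<bar>" using K2 by linarith
            then show False using nA w unfolding A_def by auto
          qed
        qed
        have Bs: "(\<Union>p\<in>UNIV. badset M (B n p) K) \<in> sets M"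
          by (intro sets.finite_UN) (auto intro: badset_sets Bb[rule_format])
        have Xs: "{\<omega>\<in>space M. \<epsilon>/2 \<le> \<bar>X n \<omega>\<bar>} \<in> sets M"
          using borel_measurable_le[OF borel_measurable_const[of "\<epsilon>/2"] borel_measurable_abs[OF Xm[of n]]] by simp
        have As: "A \<in> sets M" unfolding A_def using N0(3) Bs Xs by auto
        have mB: "measure M (\<Union>p\<in>UNIV. badset M (B n p) K) \<le> cd * (3 * r^K / (1 - r))"
        proof -
          have "measure M (\<Union>p\<in>UNIV. badset M (B n p) K) \<le> (\<Sum>p\<in>UNIV. measure M (badset M (B n p) K))"
            by (rule P.finite_measure_subadditive_finite) (auto intro: badset_sets Bb[rule_format])
          also have "\<dots> \<le> (\<Sum>p\<in>(UNIV::'d set). 3 * r^K / (1 - r))"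
            by (rule sum_mono) (use bad_measure[OF M Bb[rule_format]] in \<open>auto simp: r_def\<close>)
          also have "\<dots> = cd * (3 * r^K / (1 - r))" unfolding cd_def by simp
          finally show ?thesis .
        qed
        have "measure M A \<le> measure M (N0 \<union> (\<Union>p\<in>UNIV. badset M (B n p) K)) + measure M {\<omega>\<in>space M. \<epsilon>/2 \<le> \<bar>X n \<omega>\<bar>}"
          unfolding A_def by (rule measure_Un_le) (use N0(3) Bs Xs in auto)
        also have "measure M (N0 \<union> (\<Union>p\<in>UNIV. badset M (B n p) K)) \<le> measure M N0 + measure M (\<Union>p\<in>UNIV. badset M (B n p) K)"
          by (rule measure_Un_le) (use N0(3) Bs in auto)
        finally have "measure M A \<le> 0 + cd * (3 * r^K / (1 - r)) + measure M {\<omega>\<in>space M. \<epsilon>/2 \<le> \<bar>X n \<omega>\<bar>}"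
          using mN0 mB by linarith
        also have "\<dots> < 0 + e/2 + e/2" using K1 N1 nge by (intro add_less_le_mono add_strict_left_mono) auto
        finally have mA: "measure M A < e" by simp
        have "outer_prob M S \<le> measure M A" by (rule outer_prob_le[OF sub As])
        moreover have "0 \<le> outer_prob M S" by (rule outer_prob_nonneg) (auto simp: S_def)
        ultimately show "norm (outer_prob M {\<omega>\<in>space M. (SUP t\<in>{0<..<1}. ereal (norm (vecf n t \<omega>))) > ereal \<epsilon>} - 0) < e"
          using mA unfolding S_def by simp
      qed
    qed
    then show "(\<lambda>n. outer_prob M {\<omega>\<in>space M.
        (SUP t\<in>{0<..<1}. ereal (norm (
           (1 / sqrt (real n)) *\<^sub>R
             (\<Sum>i=1..n. h ((real_of_int (int i - \<lfloor>real n * t\<rfloor>)) / real n) *\<^sub>R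
                 (\<eta> i \<omega> - (1 / real n) *\<^sub>R (\<Sum>l=1..n. \<eta> l \<omega>)))
           - (\<chi> p. sqrt (lam $ p) *
                rs_integral (\<lambda>y. B n p (1 - t - y) \<omega>) h 0 (1 - t)))))
        > ereal \<epsilon>}) \<longlonglongrightarrow> 0"
      unfolding vecf_def .
  qed
qed

end
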